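(* Let $M$ be a closed, oriented, triangulated surface and let $C\subset M$ be a simple closed curve which is a subcomplex of $M$ and separates $M$ into two compact subsurfaces $A_1$ and $A_2$ (subcomplexes) with $A_1\cap A_2=C$, where $A_1$ is homeomorphic to a closed oriented surface $M_1$ of genus $g_1$ with an open disk removed and $A_2$ is homeomorphic to a closed oriented surface $M_2$ of genus $g_2$ with an open disk removed (so $M=M_1\#_C M_2$). Let $f$ be a perfect discrete Morse function on $M$ with gradient vector field $V$ such that the critical vertex and exactly $2g_1$ of the critical edges of $f$ lie in $A_1$, and the critical $2$-cell and the remaining $2g_2$ critical edges lie in $A_2\setminus C$. Assume further that no arrow on $C$ points into $A_2$, i.e. every vertex and edge of $C$ is paired by $V$ either with a cell of $C$ or with a cell of $A_1$ not in $C$. Let $D_1$ and $D_2$ be disks triangulated as cones over $C$, so that $A_1\cup_C D_1\cong M_1$ and $A_2\cup_C D_2\cong M_2$. Then there exist perfect discrete Morse functions $f_1$ on $A_1\cup_C D_1$ and $f_2$ on $A_2\cup_C D_2$ such that $f_1$ agrees with $f$ on $A_1$, $f_2$ agrees with $f$ on $A_2$, and the gradient vector field of $f_i$ extends the restriction of $V$ to the pairs with both cells in $A_i$ ($i=1,2$).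
   Context: A discrete Morse function on a finite regular cell complex $K$ is a function $f$ from the set of cells to $\mathbb R$ such that for every $p$-cell $\sigma$, at most one $(p+1)$-coface $\tau$ satisfies $f(\tau)\le f(\sigma)$ and at most one $(p-1)$-face $\nu$ satisfies $f(\nu)\ge f(\sigma)$; a cell is critical if neither exception occurs. Its gradient vector field $V$ is the set of pairs $(\sigma,\tau)$ ("arrows" from $\sigma$ to $\tau$), $\sigma$ a codimension-one face of $\tau$, with $f(\sigma)\ge f(\tau)$; each cell lies in at most one pair and the critical cells are those in no pair. $f$ is perfect if the number of critical $p$-cells equals $\operatorname{rank}H_p(K)$ for every $p$; for a closed oriented surface of genus $g$ this means one critical vertex, $2g$ critical edges and one critical $2$-cell. *)

theory Defs
  imports Complex_Main
begin

definition simplicial_complex :: "'a set set \<Rightarrow> bool" where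
  "simplicial_complex K \<longleftrightarrow> finite K \<and>
     (\<forall>\<sigma>\<in>K. finite \<sigma> \<and> \<sigma> \<noteq> {}) \<and>
     (\<forall>\<sigma>\<in>K. \<forall>\<tau>. \<tau> \<subseteq> \<sigma> \<and> \<tau> \<noteq> {} \<longrightarrow> \<tau> \<in> K)"

definition cells :: "'a set set \<Rightarrow> nat \<Rightarrow> 'a set set" where
  "cells K p = {\<sigma>\<in>K. card \<sigma> = Suc p}"

definition verts :: "'a set set \<Rightarrow> 'a set" where
  "verts K = \<Union>K"

definition facet :: "'a set \<Rightarrow> 'a set \<Rightarrow> bool" where
  "facet \<sigma> \<tau> \<longleftrightarrow> \<sigma> \<subseteq> \<tau> \<and> card \<tau> = Suc (card \<sigma>)"

definition connected_cx :: "'a set set \<Rightarrow> bool" where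
  "connected_cx K \<longleftrightarrow>
     (\<forall>u\<in>verts K. \<forall>v\<in>verts K. (\<lambda>x y. {x, y} \<in> K)\<^sup>*\<^sup>* u v)"

text \<open>Link of a vertex v is a connected graph (together with the edge condition
below, a single cycle, so the star of v is a disk).\<close>
definition link_connected :: "'a set set \<Rightarrow> 'a \<Rightarrow> bool" where
  "link_connected K v \<longleftrightarrow>
     (\<forall>x y. {v, x} \<in> K \<and> {v, y} \<in> K \<and> x \<noteq> v \<and> y \<noteq> v \<longrightarrow>
        (\<lambda>a b. {v, a, b} \<in> cells K 2)\<^sup>*\<^sup>* x y)"

text \<open>Orientation: each triangle gets a cyclic order (successor map, a 3-cycle on
its vertices), and two triangles sharing an edge induce opposite directions on it.\<close>
definition orientable_surface :: "'a set set \<Rightarrow> bool" where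
  "orientable_surface K \<longleftrightarrow> (\<exists>nx :: 'a set \<Rightarrow> 'a \<Rightarrow> 'a.
     (\<forall>t\<in>cells K 2. \<forall>u\<in>t. nx t u \<in> t \<and> nx t u \<noteq> u \<and> nx t (nx t (nx t u)) = u) \<and>
     (\<forall>t\<in>cells K 2. \<forall>t'\<in>cells K 2. t \<noteq> t' \<longrightarrow>
        (\<forall>u v. u \<in> t \<inter> t' \<and> v \<in> t \<inter> t' \<and> nx t u = v \<longrightarrow> nx t' v = u)))"

definition closed_oriented_surface :: "'a set set \<Rightarrow> bool" where
  "closed_oriented_surface K \<longleftrightarrow>
     simplicial_complex K \<and> K \<noteq> {} \<and>
     (\<forall>\<sigma>\<in>K. \<exists>t\<in>cells K 2. \<sigma> \<subseteq> t) \<and>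
     (\<forall>\<sigma>\<in>K. card \<sigma> \<le> 3) \<and>
     (\<forall>e\<in>cells K 1. card {t\<in>cells K 2. e \<subseteq> t} = 2) \<and>
     (\<forall>v\<in>verts K. link_connected K v) \<and>
     connected_cx K \<and>
     orientable_surface K"

definition euler_char :: "'a set set \<Rightarrow> int" where
  "euler_char K = (\<Sum>\<sigma>\<in>K. (-1::int) ^ (card \<sigma> - 1))"

text \<open>Genus of a closed oriented (connected) surface: \<chi> = 2 - 2g.\<close>
definition genus :: "'a set set \<Rightarrow> nat" where
  "genus K = nat ((2 - euler_char K) div 2)"

definition simple_closed_curve :: "'a set set \<Rightarrow> bool" where
  "simple_closed_curve C \<longleftrightarrow> simplicial_complex C \<and> C \<noteq> {} \<and>
     (\<forall>\<sigma>\<in>C. card \<sigma> \<le> 2) \<and>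
     (\<forall>v\<in>verts C. card {e\<in>cells C 1. v \<in> e} = 2) \<and>
     connected_cx C"

definition cone :: "'a \<Rightarrow> 'a set set \<Rightarrow> 'a set set" where
  "cone a C = C \<union> {insert a \<sigma> | \<sigma>. \<sigma> \<in> C} \<union> {{a}}"

definition discrete_morse :: "'a set set \<Rightarrow> ('a set \<Rightarrow> real) \<Rightarrow> bool" where
  "discrete_morse K f \<longleftrightarrow> (\<forall>\<sigma>\<in>K.
      card {\<tau>\<in>K. facet \<sigma> \<tau> \<and> f \<tau> \<le> f \<sigma>} \<le> 1 \<and>
      card {\<nu>\<in>K. facet \<nu> \<sigma> \<and> f \<nu> \<ge> f \<sigma>} \<le> 1)"

definition critical :: "'a set set \<Rightarrow> ('a set \<Rightarrow> real) \<Rightarrow> 'a set \<Rightarrow> bool" where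
  "critical K f \<sigma> \<longleftrightarrow> \<sigma> \<in> K \<and>
      (\<forall>\<tau>\<in>K. facet \<sigma> \<tau> \<longrightarrow> f \<tau> > f \<sigma>) \<and>
      (\<forall>\<nu>\<in>K. facet \<nu> \<sigma> \<longrightarrow> f \<nu> < f \<sigma>)"

definition crit_cells :: "'a set set \<Rightarrow> ('a set \<Rightarrow> real) \<Rightarrow> nat \<Rightarrow> 'a set set" where
  "crit_cells K f p = {\<sigma>\<in>cells K p. critical K f \<sigma>}"

definition gradient :: "'a set set \<Rightarrow> ('a set \<Rightarrow> real) \<Rightarrow> ('a set \<times> 'a set) set" where
  "gradient K f = {(\<sigma>, \<tau>). \<sigma> \<in> K \<and> \<tau> \<in> K \<and> facet \<sigma> \<tau> \<and> f \<sigma> \<ge> f \<tau>}"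

definition perfect_surface_dmf :: "'a set set \<Rightarrow> ('a set \<Rightarrow> real) \<Rightarrow> bool" where
  "perfect_surface_dmf K f \<longleftrightarrow> discrete_morse K f \<and>
      card (crit_cells K f 0) = 1 \<and>
      card (crit_cells K f 1) = 2 * genus K \<and>
      card (crit_cells K f 2) = 1"

end

theory Submission
  imports Defs
begin


lemma le1_sub: "S \<subseteq> h ` T \<Longrightarrow> finite T \<Longrightarrow> card T \<le> 1 \<Longrightarrow> card S \<le> 1"
  by (meson card_image_le card_mono finite_imageI le_trans)

lemma le1_single: "S \<subseteq> {x} \<Longrightarrow> card S \<le> 1"
  using card_mono[of "{x}" S] by simp

lemma facet_ins_cases:
  assumes "facet \<nu> (insert a \<rho>)" "a \<notin> \<rho>" "finite \<rho>"
  shows "(a \<notin> \<nu> \<and> \<nu> = \<rho>) \<or> (\<exists>\<mu>. \<nu> = insert a \<mu> \<and> a \<notin> \<mu> \<and> facet \<mu> \<rho>)"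
proof (cases "a \<in> \<nu>")
  case False
  have sub: "\<nu> \<subseteq> \<rho>" using assms(1) False unfolding facet_def by blast
  have "card (insert a \<rho>) = Suc (card \<rho>)" using assms by simp
  hence "card \<rho> = card \<nu>" using assms(1) unfolding facet_def by simp
  hence "\<nu> = \<rho>" using card_subset_eq[OF assms(3) sub] by simp
  then show ?thesis using False by blast
next
  case True
  define \<mu> where "\<mu> = \<nu> - {a}"
  have fin: "finite \<nu>" using assms(1,3) finite_subset unfolding facet_def by (metis finite_insert)
  have e: "\<nu> = insert a \<mu>" and am: "a \<notin> \<mu>" using True \<mu>_def by auto
  have "\<mu> \<subseteq> \<rho>" using assms(1) \<mu>_def unfolding facet_def by blast
  moreover have "card \<nu> = Suc (card \<mu>)" using fin e am by (metis card_insert_disjoint finite_insert)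
  moreover have "card (insert a \<rho>) = Suc (card \<rho>)" using assms by simp
  ultimately have "facet \<mu> \<rho>" using assms(1) unfolding facet_def by simp
  then show ?thesis using e am by blast
qed

lemma facet_from_ins:
  assumes "facet (insert a \<rho>) \<tau>" "a \<notin> \<rho>" "finite \<tau>"
  shows "\<exists>\<rho>'. \<tau> = insert a \<rho>' \<and> a \<notin> \<rho>' \<and> facet \<rho> \<rho>'"
proof -
  define \<rho>' where "\<rho>' = \<tau> - {a}"
  have "a \<in> \<tau>" using assms unfolding facet_def by auto
  hence e: "\<tau> = insert a \<rho>'" and am: "a \<notin> \<rho>'" using \<rho>'_def by auto
  have "\<rho> \<subseteq> \<rho>'" using assms \<rho>'_def unfolding facet_def by auto
  moreover have "card \<tau> = Suc (card \<rho>')" using e am assms(3) by (metis card_insert_disjoint finite_insert)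
  moreover have "finite \<rho>" using assms(1,3) unfolding facet_def by (meson finite_insert finite_subset)
  moreover hence "card (insert a \<rho>) = Suc (card \<rho>)" using assms by simp
  ultimately have "facet \<rho> \<rho>'" using assms(1) unfolding facet_def by simp
  then show ?thesis using e am by blast
qed

lemma facet_ins_iff:
  assumes "a \<notin> \<mu>" "a \<notin> \<rho>" "finite \<rho>" "finite \<mu>"
  shows "facet (insert a \<mu>) (insert a \<rho>) \<longleftrightarrow> facet \<mu> \<rho>"
proof -
  have "insert a \<mu> \<subseteq> insert a \<rho> \<longleftrightarrow> \<mu> \<subseteq> \<rho>" using assms by blast
  moreover have "card (insert a \<mu>) = Suc (card \<mu>)" "card (insert a \<rho>) = Suc (card \<rho>)"
    using assms by auto
  ultimately show ?thesis unfolding facet_def by simp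
qed

lemma facet_ins_self: "a \<notin> \<rho> \<Longrightarrow> finite \<rho> \<Longrightarrow> facet \<rho> (insert a \<rho>)"
  unfolding facet_def by auto
lemma handshake0:
  assumes fE: "finite E" and fV: "finite V" and EV: "\<forall>e\<in>E. e \<subseteq> V \<and> card e = 2"
    and deg: "\<forall>v\<in>V. card {e\<in>E. v \<in> e} = 2"
  shows "card E = card V"
proof -
  have "(\<Sum>v\<in>V. card {e\<in>E. v \<in> e}) = (\<Sum>v\<in>V. \<Sum>e\<in>E. if v \<in> e then 1 else 0)"
    by (intro sum.cong refl) (simp add: sum.If_cases Int_def fE)
  also have "\<dots> = (\<Sum>e\<in>E. \<Sum>v\<in>V. if v \<in> e then 1 else 0)" by (rule sum.swap)
  also have "\<dots> = (\<Sum>e\<in>E. 2)"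
  proof (rule sum.cong)
    fix e assume "e \<in> E"
    thus "(\<Sum>v\<in>V. if v \<in> e then 1 else 0) = (2::nat)"
      using EV by (simp add: sum.If_cases Int_absorb1 fV)
  qed simp
  finally have "(\<Sum>v\<in>V. card {e\<in>E. v \<in> e}) = 2 * card E" by simp
  moreover have "(\<Sum>v\<in>V. card {e\<in>E. v \<in> e}) = 2 * card V" using deg by simp
  ultimately show ?thesis by simp
qed



lemma tree_exists:
  assumes conn: "connected_cx C" and v0: "v0 \<in> \<Union>C"
  shows "\<exists>(d::'a \<Rightarrow> nat) par. d v0 = 0 \<and> (\<forall>v\<in>\<Union>C. v \<noteq> v0 \<longrightarrow>
            par v \<in> \<Union>C \<and> {v, par v} \<in> C \<and> par v \<noteq> v \<and> d (par v) < d v)"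
proof -
  define adj where "adj = (\<lambda>x y. {x, y} \<in> C)"
  define d where "d = (\<lambda>v. LEAST k. (adj ^^ k) v0 v)"
  have reach: "\<exists>k. (adj ^^ k) v0 v" if "v \<in> \<Union>C" for v
    using conn v0 that unfolding connected_cx_def verts_def adj_def
    by (simp add: rtranclp_power) blast
  have dv: "(adj ^^ d v) v0 v" if "v \<in> \<Union>C" for v
    unfolding d_def using reach[OF that] by (rule LeastI_ex)
  have d0: "d v0 = 0" unfolding d_def by (rule Least_eq_0) simp
  have step: "\<exists>u. u \<in> \<Union>C \<and> {v, u} \<in> C \<and> u \<noteq> v \<and> d u < d v" if "v \<in> \<Union>C" "v \<noteq> v0" for v
  proof -
    have "d v \<noteq> 0" using dv[OF that(1)] that(2) by (metis relpowp.simps(1))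
    then obtain k where k: "d v = Suc k" by (cases "d v") auto
    with dv[OF that(1)] obtain u where u: "(adj ^^ k) v0 u" "adj u v"
      by (metis relpowp_Suc_E)
    have "d u \<le> k" unfolding d_def using u(1) by (rule Least_le)
    moreover have "{v, u} \<in> C" using u(2) unfolding adj_def by (simp add: insert_commute)
    ultimately show ?thesis using k by (intro exI[of _ u]) auto
  qed
  define par where "par = (\<lambda>v. SOME u. u \<in> \<Union>C \<and> {v, u} \<in> C \<and> u \<noteq> v \<and> d u < d v)"
  have "\<forall>v\<in>\<Union>C. v \<noteq> v0 \<longrightarrow> par v \<in> \<Union>C \<and> {v, par v} \<in> C \<and> par v \<noteq> v \<and> d (par v) < d v"
    unfolding par_def using step by (metis (mono_tags, lifting) someI_ex)
  with d0 show ?thesis by blast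
qed





locale spl =
  fixes M A C :: "'a set set" and f :: "'a set \<Rightarrow> real" and a :: 'a
  assumes hM: "simplicial_complex M" and dmM: "discrete_morse M f"
    and hA: "simplicial_complex A" and AM: "A \<subseteq> M"
    and hC: "simplicial_complex C" and CA: "C \<subseteq> A"
    and sub: "\<forall>\<sigma>\<in>A. \<forall>\<tau>\<in>M. facet \<sigma> \<tau> \<longrightarrow> \<tau> \<in> A \<or> \<sigma> \<in> C"
    and na: "a \<notin> \<Union>M"
begin

abbreviation "K \<equiv> A \<union> cone a C"

definition upM where "upM \<sigma> = {\<tau>\<in>M. facet \<sigma> \<tau> \<and> f \<tau> \<le> f \<sigma>}"
definition downM where "downM \<sigma> = {\<nu>\<in>M. facet \<nu> \<sigma> \<and> f \<nu> \<ge> f \<sigma>}"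

lemma finM: "finite M" using hM unfolding simplicial_complex_def by blast
lemma cellM: "\<sigma> \<in> M \<Longrightarrow> finite \<sigma> \<and> \<sigma> \<noteq> {} \<and> a \<notin> \<sigma>"
  using hM na unfolding simplicial_complex_def by blast
lemma cellA: "\<sigma> \<in> A \<Longrightarrow> finite \<sigma> \<and> \<sigma> \<noteq> {} \<and> a \<notin> \<sigma> \<and> \<sigma> \<in> M"
  using cellM AM by blast
lemma cellC: "\<sigma> \<in> C \<Longrightarrow> finite \<sigma> \<and> \<sigma> \<noteq> {} \<and> a \<notin> \<sigma> \<and> \<sigma> \<in> M \<and> \<sigma> \<in> A"
  using cellA CA by blast

lemma upM_le1: "\<sigma> \<in> M \<Longrightarrow> card (upM \<sigma>) \<le> 1"
  using dmM unfolding discrete_morse_def upM_def by auto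
lemma downM_le1: "\<sigma> \<in> M \<Longrightarrow> card (downM \<sigma>) \<le> 1"
  using dmM unfolding discrete_morse_def downM_def by auto
lemma upM_fin: "finite (upM \<sigma>)" using finM unfolding upM_def by auto
lemma downM_fin: "finite (downM \<sigma>)" using finM unfolding downM_def by auto

lemma K_cases: assumes "\<sigma> \<in> K"
  shows "(a \<notin> \<sigma> \<and> \<sigma> \<in> A) \<or> (\<exists>\<rho>. \<sigma> = insert a \<rho> \<and> a \<notin> \<rho> \<and> (\<rho> = {} \<or> \<rho> \<in> C))"
proof -
  consider "\<sigma> \<in> A" | "\<sigma> = {a}" | \<rho> where "\<rho> \<in> C" "\<sigma> = insert a \<rho>"
    using assms CA unfolding cone_def by blast
  thus ?thesis
  proof cases
    case 1 thus ?thesis using cellA by blast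
  next
    case 2 thus ?thesis by blast
  next
    case 3
    hence "a \<notin> \<rho>" using cellC by blast
    thus ?thesis using 3 by blast
  qed
qed

lemma K_ins: "\<rho> \<in> C \<Longrightarrow> insert a \<rho> \<in> K" "{a} \<in> K"
  unfolding cone_def by blast+

lemma K_fin: assumes "\<sigma> \<in> K" shows "finite \<sigma> \<and> \<sigma> \<noteq> {}"
proof -
  from K_cases[OF assms] show ?thesis
  proof
    assume "\<exists>\<rho>. \<sigma> = insert a \<rho> \<and> a \<notin> \<rho> \<and> (\<rho> = {} \<or> \<rho> \<in> C)"
    then obtain \<rho> where h: "\<sigma> = insert a \<rho>" "\<rho> = {} \<or> \<rho> \<in> C" by blast
    hence "finite \<rho>" using cellC by blast
    thus ?thesis using h(1) by simp
  qed (use cellA in blast)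
qed

lemma cofaces_A: assumes "\<sigma> \<in> A" "\<tau> \<in> K" "facet \<sigma> \<tau>"
  shows "(a \<notin> \<tau> \<and> \<tau> \<in> A) \<or> (\<sigma> \<in> C \<and> \<tau> = insert a \<sigma>)"
proof -
  from K_cases[OF assms(2)] show ?thesis
  proof
    assume "\<exists>\<rho>. \<tau> = insert a \<rho> \<and> a \<notin> \<rho> \<and> (\<rho> = {} \<or> \<rho> \<in> C)"
    then obtain \<rho> where h: "\<tau> = insert a \<rho>" "a \<notin> \<rho>" "\<rho> = {} \<or> \<rho> \<in> C" by blast
    have fin: "finite \<rho>" using h(3) cellC by blast
    have as: "a \<notin> \<sigma>" "\<sigma> \<noteq> {}" using cellA assms(1) by blast+
    have "facet \<sigma> (insert a \<rho>)" using assms(3) h(1) by simp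
    hence "\<sigma> = \<rho>" using facet_ins_cases[of \<sigma> a \<rho>] h(2) as(1) fin by blast
    thus ?thesis using h as(2) by blast
  qed blast
qed

lemma faces_A: assumes "\<sigma> \<in> A" "\<nu> \<in> K" "facet \<nu> \<sigma>"
  shows "\<nu> \<in> A \<and> a \<notin> \<nu>"
proof -
  have "a \<notin> \<sigma>" using assms(1) cellA by blast
  hence "a \<notin> \<nu>" using assms(3) unfolding facet_def by blast
  thus ?thesis using K_cases[OF assms(2)] by blast
qed

lemma faces_M: assumes "\<sigma> \<in> A" "\<nu> \<in> M" "facet \<nu> \<sigma>" shows "\<nu> \<in> A"
  using assms hA cellM unfolding simplicial_complex_def facet_def by blast

lemma cofaces_cone: assumes "\<rho> = {} \<or> \<rho> \<in> C" "\<tau> \<in> K" "facet (insert a \<rho>) \<tau>"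
  shows "\<exists>\<rho>'\<in>C. \<tau> = insert a \<rho>' \<and> facet \<rho> \<rho>'"
proof -
  have arho: "a \<notin> \<rho>" using assms(1) cellC by blast
  obtain \<rho>' where r: "\<tau> = insert a \<rho>'" "a \<notin> \<rho>'" "facet \<rho> \<rho>'"
    using facet_from_ins[OF assms(3) arho] K_fin[OF assms(2)] by blast
  have ne: "\<rho>' \<noteq> {}" using r(3) unfolding facet_def by auto
  from K_cases[OF assms(2)] have "\<rho>' \<in> C"
  proof
    assume "a \<notin> \<tau> \<and> \<tau> \<in> A" thus ?thesis using r(1) by simp
  next
    assume "\<exists>\<rho>. \<tau> = insert a \<rho> \<and> a \<notin> \<rho> \<and> (\<rho> = {} \<or> \<rho> \<in> C)"
    then obtain \<rho>2 where h: "\<tau> = insert a \<rho>2" "a \<notin> \<rho>2" "\<rho>2 = {} \<or> \<rho>2 \<in> C" by blast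
    have "\<rho>2 = \<rho>'" using h(1,2) r(1,2) by (metis Diff_insert_absorb)
    thus ?thesis using h(3) ne by blast
  qed
  thus ?thesis using r by blast
qed

lemma faces_cone: assumes "\<rho> = {} \<or> \<rho> \<in> C" "\<nu> \<in> K" "facet \<nu> (insert a \<rho>)"
  shows "(\<nu> = \<rho> \<and> \<rho> \<in> C) \<or> (\<exists>\<mu>. \<nu> = insert a \<mu> \<and> (\<mu> = {} \<or> \<mu> \<in> C) \<and> facet \<mu> \<rho>)"
proof -
  have arho: "a \<notin> \<rho>" "finite \<rho>" using assms(1) cellC by blast+
  from facet_ins_cases[OF assms(3) arho] show ?thesis
  proof
    assume "a \<notin> \<nu> \<and> \<nu> = \<rho>"
    thus ?thesis using K_fin[OF assms(2)] assms(1) by blast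
  next
    assume "\<exists>\<mu>. \<nu> = insert a \<mu> \<and> a \<notin> \<mu> \<and> facet \<mu> \<rho>"
    then obtain \<mu> where m: "\<nu> = insert a \<mu>" "a \<notin> \<mu>" "facet \<mu> \<rho>" by blast
    from K_cases[OF assms(2)] have "\<mu> = {} \<or> \<mu> \<in> C"
    proof
      assume "a \<notin> \<nu> \<and> \<nu> \<in> A" thus ?thesis using m(1) by simp
    next
      assume "\<exists>\<rho>. \<nu> = insert a \<rho> \<and> a \<notin> \<rho> \<and> (\<rho> = {} \<or> \<rho> \<in> C)"
      then obtain \<rho>2 where h: "\<nu> = insert a \<rho>2" "a \<notin> \<rho>2" "\<rho>2 = {} \<or> \<rho>2 \<in> C" by blast
      have "\<rho>2 = \<mu>" using h(1,2) m(1,2) by (metis Diff_insert_absorb)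
      thus ?thesis using h(3) by blast
    qed
    thus ?thesis using m by blast
  qed
qed

lemma crit_A_iff: assumes "\<sigma> \<in> A" "\<sigma> \<notin> C" "\<forall>\<tau>\<in>A. g \<tau> = f \<tau>"
  shows "critical K g \<sigma> \<longleftrightarrow> critical M f \<sigma>"
proof -
  have cof: "(\<tau> \<in> K \<and> facet \<sigma> \<tau>) \<longleftrightarrow> (\<tau> \<in> A \<and> facet \<sigma> \<tau>)" for \<tau>
    using cofaces_A[OF assms(1)] assms(2) by blast
  have cof2: "(\<tau> \<in> M \<and> facet \<sigma> \<tau>) \<longleftrightarrow> (\<tau> \<in> A \<and> facet \<sigma> \<tau>)" for \<tau>
    using sub assms(1,2) AM by blast
  have fac: "(\<nu> \<in> K \<and> facet \<nu> \<sigma>) \<longleftrightarrow> (\<nu> \<in> A \<and> facet \<nu> \<sigma>)" for \<nu>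
    using faces_A[OF assms(1)] by blast
  have fac2: "(\<nu> \<in> M \<and> facet \<nu> \<sigma>) \<longleftrightarrow> (\<nu> \<in> A \<and> facet \<nu> \<sigma>)" for \<nu>
    using faces_M[OF assms(1)] AM by blast
  have "\<sigma> \<in> K" "\<sigma> \<in> M" using assms AM by blast+
  have "critical K g \<sigma> \<longleftrightarrow> (\<forall>\<tau>\<in>A. facet \<sigma> \<tau> \<longrightarrow> g \<tau> > g \<sigma>) \<and> (\<forall>\<nu>\<in>A. facet \<nu> \<sigma> \<longrightarrow> g \<nu> < g \<sigma>)"
    unfolding critical_def using \<open>\<sigma> \<in> K\<close> cof fac by blast
  also have "\<dots> \<longleftrightarrow> (\<forall>\<tau>\<in>A. facet \<sigma> \<tau> \<longrightarrow> f \<tau> > f \<sigma>) \<and> (\<forall>\<nu>\<in>A. facet \<nu> \<sigma> \<longrightarrow> f \<nu> < f \<sigma>)"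
    using assms(1,3) by simp
  also have "\<dots> \<longleftrightarrow> critical M f \<sigma>"
    unfolding critical_def using \<open>\<sigma> \<in> M\<close> cof2 fac2 by blast
  finally show ?thesis .
qed

end



lemma pos_below: assumes "finite (S::real set)" "\<forall>x\<in>S. x > 0" shows "\<exists>c>0. \<forall>x\<in>S. c < x"
proof (cases "S = {}")
  case True thus ?thesis by (intro exI[of _ 1]) simp
next
  case False
  have "Min S > 0" using assms False by simp
  moreover have "\<forall>x\<in>S. Min S / 2 < x"
  proof
    fix x assume "x \<in> S"
    hence "Min S \<le> x" using assms(1) by simp
    thus "Min S / 2 < x" using \<open>Min S > 0\<close> by linarith
  qed
  ultimately show ?thesis by (intro exI[of _ "Min S / 2"]) simp
qed

lemma grad_iff: "(x, y) \<in> gradient K f \<longleftrightarrow> x \<in> K \<and> y \<in> K \<and> facet x y \<and> f y \<le> f x"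
  unfolding gradient_def by simp

context spl begin

lemma boundB: "\<sigma> \<in> M \<Longrightarrow> \<bar>f \<sigma>\<bar> \<le> (\<Sum>\<sigma>\<in>M. \<bar>f \<sigma>\<bar>)"
  by (rule member_le_sum) (simp_all add: finM)

lemma finC: "finite C"
proof -
  have "C \<subseteq> M" using CA AM by blast
  thus ?thesis using finM by (rule finite_subset)
qed

end



context spl begin

lemma side1:
  assumes noarr: "\<forall>\<sigma>\<in>C. \<forall>\<tau>. ((\<sigma>, \<tau>) \<in> gradient M f \<or> (\<tau>, \<sigma>) \<in> gradient M f) \<longrightarrow> \<tau> \<in> A"
    and scc: "simple_closed_curve C"
  shows "\<exists>h. discrete_morse K h \<and> (\<forall>\<sigma>\<in>A. h \<sigma> = f \<sigma>) \<and>
     (\<exists>e0. e0 \<in> C \<and> card e0 = 2 \<and> (\<forall>\<sigma>\<in>K. critical K h \<sigma> \<longleftrightarrow> (\<sigma> \<in> A \<and> critical M f \<sigma>) \<or> \<sigma> = insert a e0))"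
proof -
  define V where "V = \<Union>C"
  define E where "E = cells C 1"
  have c2: "\<forall>\<sigma>\<in>C. card \<sigma> \<le> 2" and deg: "\<forall>v\<in>V. card {e\<in>E. v \<in> e} = 2"
    and conn: "connected_cx C" and Cne: "C \<noteq> {}"
    using scc unfolding simple_closed_curve_def V_def E_def verts_def by blast+
  obtain v0 where v0: "v0 \<in> V"
  proof -
    obtain \<sigma> where "\<sigma> \<in> C" using Cne by blast
    moreover hence "\<sigma> \<noteq> {}" using cellC by blast
    ultimately show ?thesis using that unfolding V_def by blast
  qed
  obtain d :: "'a \<Rightarrow> nat" and par where d0: "d v0 = 0" and
    dp: "\<forall>v\<in>V. v \<noteq> v0 \<longrightarrow> par v \<in> V \<and> {v, par v} \<in> C \<and> par v \<noteq> v \<and> d (par v) < d v"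
    using tree_exists[OF conn v0[unfolded V_def]] unfolding V_def by blast
  have finV: "finite V" unfolding V_def by (rule finite_Union[OF finC]) (use cellC in blast)
  have finE: "finite E" unfolding E_def cells_def using finC by simp
  have EC: "E \<subseteq> C" unfolding E_def cells_def by blast
  have Ecard: "e \<in> E \<Longrightarrow> card e = 2" for e unfolding E_def cells_def by simp
  have EV: "\<forall>e\<in>E. e \<subseteq> V \<and> card e = 2"
  proof
    fix e assume "e \<in> E"
    thus "e \<subseteq> V \<and> card e = 2" using EC Ecard[of e] unfolding V_def by blast
  qed
  have sing: "{v} \<in> C" if vV: "v \<in> V" for v
  proof -
    obtain \<sigma> where "\<sigma> \<in> C" "v \<in> \<sigma>" using vV unfolding V_def by blast
    hence "{v} \<subseteq> \<sigma>" "{v} \<noteq> {}" by simp_all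
    thus ?thesis using hC \<open>\<sigma> \<in> C\<close> unfolding simplicial_complex_def by (metis (no_types, lifting))
  qed
  have singE: "{v} \<notin> E" for v using Ecard by fastforce
  have cellsC: "(\<exists>v\<in>V. \<rho> = {v}) \<or> \<rho> \<in> E" if "\<rho> \<in> C" for \<rho>
  proof -
    have "card \<rho> \<le> 2" "\<rho> \<noteq> {}" "finite \<rho>" using c2 that cellC by blast+
    moreover have "card \<rho> \<noteq> 0" using \<open>\<rho> \<noteq> {}\<close> \<open>finite \<rho>\<close> by simp
    ultimately have "card \<rho> = 1 \<or> card \<rho> = 2" by linarith
    thus ?thesis
    proof
      assume "card \<rho> = 1"
      then obtain v where "\<rho> = {v}" by (rule card_1_singletonE)
      thus ?thesis using that unfolding V_def by blast
    qed (use that in \<open>simp add: E_def cells_def\<close>)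
  qed
  have dz: "d v = 0 \<longleftrightarrow> v = v0" if vV: "v \<in> V" for v
  proof (cases "v = v0")
    case False
    hence "d (par v) < d v" using dp vV by blast
    thus ?thesis using False by simp
  qed (simp add: d0)
  have pE: "{w, par w} \<in> E" if wV: "w \<in> V" "w \<noteq> v0" for w
  proof -
    have "{w, par w} \<in> C" "par w \<noteq> w" using dp wV by blast+
    thus ?thesis unfolding E_def cells_def by simp
  qed
  define T where "T = (\<lambda>w. {w, par w}) ` (V - {v0})"
  have injT: "x = w" if "x \<in> V" "x \<noteq> v0" "w \<in> V" "w \<noteq> v0" "{x, par x} = {w, par w}" for x w
  proof (rule ccontr)
    assume "x \<noteq> w"
    hence "x = par w" "w = par x" using that(5) by (metis doubleton_eq_iff)+
    thus False using dp that by (metis less_asym)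
  qed
  have TE: "T \<subseteq> E" unfolding T_def using pE by blast
  have cardT: "card T = card V - 1"
  proof -
    have "inj_on (\<lambda>w. {w, par w}) (V - {v0})" unfolding inj_on_def using injT by blast
    hence "card T = card (V - {v0})" unfolding T_def by (rule card_image)
    thus ?thesis using v0 finV by simp
  qed
  have cardE: "card E = card V" by (rule handshake0[OF finE finV EV deg])
  have "card V \<noteq> 0" using v0 finV by (simp add: card_eq_0_iff) blast
  moreover have "card (E - T) = card E - card T"
    using card_Diff_subset[OF finite_subset[OF TE finE] TE] .
  ultimately have "card (E - T) = 1" using cardT cardE by linarith
  then obtain e0 where e0: "E - T = {e0}" by (rule card_1_singletonE)
  have e0E: "e0 \<in> E" "e0 \<notin> T" using e0 by blast+
  define g1 where "g1 \<rho> = (if \<rho> = {} then 0 else 2 * Max (d ` \<rho>) + (if \<rho> \<in> E - T then 1 else 0))" for \<rho>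
  have g1s: "g1 {v} = 2 * d v" for v unfolding g1_def using singE by simp
  have g1p: "g1 {w, par w} = 2 * d w" if "w \<in> V" "w \<noteq> v0" for w
  proof -
    have "{w, par w} \<in> T" unfolding T_def using that by blast
    moreover have "d (par w) < d w" using dp that by blast
    ultimately show ?thesis unfolding g1_def by simp
  qed
  have key: "x \<in> V \<and> x \<noteq> v0 \<and> e = {x, par x}" if "e \<in> E" "x \<in> e" "g1 e \<le> 2 * d x" for e x
  proof -
    have "card e = 2" using Ecard that(1) by blast
    hence fe: "finite e" "e \<noteq> {}" using that(2) card.infinite by fastforce+
    have "d x \<le> Max (d ` e)" using fe that(2) by simp
    hence "e \<notin> E - T" using that(3) fe unfolding g1_def by (auto split: if_splits)
    hence "e \<in> T" using that(1) by blast
    then obtain w where w: "w \<in> V" "w \<noteq> v0" "e = {w, par w}" unfolding T_def by blast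
    have lt: "d (par w) < d w" using dp w by blast
    have "g1 e = 2 * d w" using g1p w by simp
    hence "d w \<le> d x" using that(3) by simp
    moreover have "x = w \<or> x = par w" using w(3) that(2) by blast
    ultimately have "x = w" using lt by (metis not_le)
    thus ?thesis using w by blast
  qed
  define B where "B = (\<Sum>\<sigma>\<in>M. \<bar>f \<sigma>\<bar>)"
  have bnd: "f \<sigma> < B + 1" if "\<sigma> \<in> M" for \<sigma>
  proof -
    have "\<bar>f \<sigma>\<bar> \<le> B" unfolding B_def using that by (rule boundB)
    thus ?thesis by linarith
  qed
  define h where "h \<sigma> = (if a \<in> \<sigma> then B + 1 + real (g1 (\<sigma> - {a})) else f \<sigma>)" for \<sigma>
  have hA: "h \<sigma> = f \<sigma>" if "\<sigma> \<in> A" for \<sigma>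
  proof -
    have "a \<notin> \<sigma>" using that cellA by blast
    thus ?thesis unfolding h_def by simp
  qed
  have hA': "\<forall>\<sigma>\<in>A. h \<sigma> = f \<sigma>" using hA by blast
  have hI: "h (insert a \<rho>) = B + 1 + real (g1 \<rho>)" if "a \<notin> \<rho>" for \<rho>
    unfolding h_def using that by simp
  have hAlt: "h \<sigma> < h (insert a \<rho>)" if "\<sigma> \<in> A" "a \<notin> \<rho>" for \<sigma> \<rho>
  proof -
    have "\<sigma> \<in> M" using that(1) AM by blast
    thus ?thesis using hA[OF that(1)] hI[OF that(2)] bnd by force
  qed
  have card_facet: "card \<rho>' = Suc (card \<rho>)" if "facet \<rho> \<rho>'" for \<rho> \<rho>' :: "'a set"
    using that unfolding facet_def by blast
  have Ecard3: "\<not> (\<rho>' \<in> C \<and> card \<rho>' = Suc 2)" for \<rho>' using c2 by fastforce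
  have aV: "a \<notin> \<rho>" if "\<rho> \<in> C" for \<rho> using that cellC by blast
  have up_le: "card {\<tau>\<in>K. facet \<sigma> \<tau> \<and> h \<tau> \<le> h \<sigma>} \<le> 1" if "\<sigma> \<in> K" for \<sigma>
  proof -
    from K_cases[OF that] consider (A) "a \<notin> \<sigma>" "\<sigma> \<in> A"
      | (Co) \<rho> where "\<sigma> = insert a \<rho>" "a \<notin> \<rho>" "\<rho> = {} \<or> \<rho> \<in> C" by blast
    thus ?thesis
    proof cases
      case A
      have "{\<tau>\<in>K. facet \<sigma> \<tau> \<and> h \<tau> \<le> h \<sigma>} \<subseteq> upM \<sigma>"
      proof
        fix \<tau> assume "\<tau> \<in> {\<tau>\<in>K. facet \<sigma> \<tau> \<and> h \<tau> \<le> h \<sigma>}"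
        hence \<tau>: "\<tau> \<in> K" "facet \<sigma> \<tau>" "h \<tau> \<le> h \<sigma>" by blast+
        from cofaces_A[OF A(2) \<tau>(1,2)] show "\<tau> \<in> upM \<sigma>"
        proof
          assume hh: "a \<notin> \<tau> \<and> \<tau> \<in> A"
          hence "f \<tau> \<le> f \<sigma>" using \<tau>(3) hA A(2) by simp
          moreover have "\<tau> \<in> M" using hh AM by blast
          ultimately show ?thesis unfolding upM_def using \<tau>(2) by blast
        next
          assume hh: "\<sigma> \<in> C \<and> \<tau> = insert a \<sigma>"
          thus ?thesis using hAlt[OF A(2) A(1)] \<tau>(3) by simp
        qed
      qed
      moreover have "\<sigma> \<in> M" using A(2) AM by blast
      ultimately show ?thesis using upM_le1 upM_fin card_mono le_trans by metis
    next
      case Co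
      have hs: "h \<sigma> = B + 1 + real (g1 \<rho>)" using hI Co(1,2) by simp
      have cof: "\<exists>\<rho>'\<in>C. \<tau> = insert a \<rho>' \<and> facet \<rho> \<rho>' \<and> g1 \<rho>' \<le> g1 \<rho>"
        if "\<tau> \<in> {\<tau>\<in>K. facet \<sigma> \<tau> \<and> h \<tau> \<le> h \<sigma>}" for \<tau>
      proof -
        have \<tau>: "\<tau> \<in> K" "facet (insert a \<rho>) \<tau>" "h \<tau> \<le> h \<sigma>" using that Co(1) by blast+
        obtain \<rho>' where r: "\<rho>' \<in> C" "\<tau> = insert a \<rho>'" "facet \<rho> \<rho>'"
          using cofaces_cone[OF Co(3) \<tau>(1,2)] by blast
        have "h \<tau> = B + 1 + real (g1 \<rho>')" using hI aV[OF r(1)] r(2) by simp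
        hence "g1 \<rho>' \<le> g1 \<rho>" using \<tau>(3) hs by simp
        thus ?thesis using r by blast
      qed
      consider (E) "\<rho> = {}" | (V) v where "v \<in> V" "\<rho> = {v}" | (Ed) "\<rho> \<in> E"
        using Co(3) cellsC by blast
      thus ?thesis
      proof cases
        case E
        have "{\<tau>\<in>K. facet \<sigma> \<tau> \<and> h \<tau> \<le> h \<sigma>} \<subseteq> {insert a {v0}}"
        proof
          fix \<tau> assume "\<tau> \<in> {\<tau>\<in>K. facet \<sigma> \<tau> \<and> h \<tau> \<le> h \<sigma>}"
          then obtain \<rho>' where r: "\<rho>' \<in> C" "\<tau> = insert a \<rho>'" "facet \<rho> \<rho>'" "g1 \<rho>' \<le> g1 \<rho>"
            using cof by blast
          have "card \<rho>' = 1" using card_facet[OF r(3)] E by simp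
          then obtain v where v: "\<rho>' = {v}" by (rule card_1_singletonE)
          have "v \<in> V" using r(1) v unfolding V_def by blast
          moreover have "d v = 0" using r(4) v g1s E unfolding g1_def by simp
          ultimately have "v = v0" using dz by blast
          thus "\<tau> \<in> {insert a {v0}}" using v r(2) by simp
        qed
        thus ?thesis by (rule le1_single)
      next
        case V
        have "{\<tau>\<in>K. facet \<sigma> \<tau> \<and> h \<tau> \<le> h \<sigma>} \<subseteq> {insert a {v, par v}}"
        proof
          fix \<tau> assume "\<tau> \<in> {\<tau>\<in>K. facet \<sigma> \<tau> \<and> h \<tau> \<le> h \<sigma>}"
          then obtain \<rho>' where r: "\<rho>' \<in> C" "\<tau> = insert a \<rho>'" "facet \<rho> \<rho>'" "g1 \<rho>' \<le> g1 \<rho>"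
            using cof by blast
          have "card \<rho>' = 2" using card_facet[OF r(3)] V by simp
          hence "\<rho>' \<in> E" using r(1) unfolding E_def cells_def by simp
          moreover have "v \<in> \<rho>'" using r(3) V unfolding facet_def by blast
          moreover have "g1 \<rho>' \<le> 2 * d v" using r(4) V g1s by simp
          ultimately have "\<rho>' = {v, par v}" using key by blast
          thus "\<tau> \<in> {insert a {v, par v}}" using r(2) by simp
        qed
        thus ?thesis by (rule le1_single)
      next
        case Ed
        have "{\<tau>\<in>K. facet \<sigma> \<tau> \<and> h \<tau> \<le> h \<sigma>} \<subseteq> {undefined}"
        proof
          fix \<tau> assume "\<tau> \<in> {\<tau>\<in>K. facet \<sigma> \<tau> \<and> h \<tau> \<le> h \<sigma>}"
          then obtain \<rho>' where r: "\<rho>' \<in> C" "\<tau> = insert a \<rho>'" "facet \<rho> \<rho>'" "g1 \<rho>' \<le> g1 \<rho>"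
            using cof by blast
          have "card \<rho>' = Suc 2" using card_facet[OF r(3)] Ecard[OF Ed] by simp
          thus "\<tau> \<in> {undefined}" using Ecard3 r(1) by blast
        qed
        thus ?thesis by (rule le1_single)
      qed
    qed
  qed
  have dn_le: "card {\<nu>\<in>K. facet \<nu> \<sigma> \<and> h \<nu> \<ge> h \<sigma>} \<le> 1" if "\<sigma> \<in> K" for \<sigma>
  proof -
    from K_cases[OF that] consider (A) "a \<notin> \<sigma>" "\<sigma> \<in> A"
      | (Co) \<rho> where "\<sigma> = insert a \<rho>" "a \<notin> \<rho>" "\<rho> = {} \<or> \<rho> \<in> C" by blast
    thus ?thesis
    proof cases
      case A
      have "{\<nu>\<in>K. facet \<nu> \<sigma> \<and> h \<nu> \<ge> h \<sigma>} \<subseteq> downM \<sigma>"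
      proof
        fix \<nu> assume "\<nu> \<in> {\<nu>\<in>K. facet \<nu> \<sigma> \<and> h \<nu> \<ge> h \<sigma>}"
        hence \<nu>: "\<nu> \<in> K" "facet \<nu> \<sigma>" "h \<nu> \<ge> h \<sigma>" by blast+
        have hh: "\<nu> \<in> A" using faces_A[OF A(2) \<nu>(1,2)] by blast
        hence "f \<nu> \<ge> f \<sigma>" using \<nu>(3) hA A(2) by simp
        moreover have "\<nu> \<in> M" using hh AM by blast
        ultimately show "\<nu> \<in> downM \<sigma>" unfolding downM_def using \<nu>(2) by blast
      qed
      moreover have "\<sigma> \<in> M" using A(2) AM by blast
      ultimately show ?thesis using downM_le1 downM_fin card_mono le_trans by metis
    next
      case Co
      have hs: "h \<sigma> = B + 1 + real (g1 \<rho>)" using hI Co(1,2) by simp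
      have fac: "\<exists>\<mu>. \<nu> = insert a \<mu> \<and> (\<mu> = {} \<or> \<mu> \<in> C) \<and> facet \<mu> \<rho> \<and> g1 \<mu> \<ge> g1 \<rho>"
        if "\<nu> \<in> {\<nu>\<in>K. facet \<nu> \<sigma> \<and> h \<nu> \<ge> h \<sigma>}" for \<nu>
      proof -
        have \<nu>: "\<nu> \<in> K" "facet \<nu> (insert a \<rho>)" "h \<nu> \<ge> h \<sigma>" using that Co(1) by blast+
        from faces_cone[OF Co(3) \<nu>(1,2)] show ?thesis
        proof
          assume hh: "\<nu> = \<rho> \<and> \<rho> \<in> C"
          hence "h \<nu> < h \<sigma>" using hAlt[of \<rho> \<rho>] Co(1,2) CA by blast
          thus ?thesis using \<nu>(3) by simp
        next
          assume "\<exists>\<mu>. \<nu> = insert a \<mu> \<and> (\<mu> = {} \<or> \<mu> \<in> C) \<and> facet \<mu> \<rho>"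
          then obtain \<mu> where m: "\<nu> = insert a \<mu>" "\<mu> = {} \<or> \<mu> \<in> C" "facet \<mu> \<rho>" by blast
          have "a \<notin> \<mu>" using m(2) aV by blast
          hence "h \<nu> = B + 1 + real (g1 \<mu>)" using hI m(1) by simp
          hence "g1 \<mu> \<ge> g1 \<rho>" using \<nu>(3) hs by simp
          thus ?thesis using m by blast
        qed
      qed
      consider (E) "\<rho> = {}" | (V) v where "v \<in> V" "\<rho> = {v}" | (Ed) "\<rho> \<in> E"
        using Co(3) cellsC by blast
      thus ?thesis
      proof cases
        case E
        have "{\<nu>\<in>K. facet \<nu> \<sigma> \<and> h \<nu> \<ge> h \<sigma>} \<subseteq> {undefined}"
        proof
          fix \<nu> assume "\<nu> \<in> {\<nu>\<in>K. facet \<nu> \<sigma> \<and> h \<nu> \<ge> h \<sigma>}"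
          then obtain \<mu> where "facet \<mu> \<rho>" using fac by blast
          thus "\<nu> \<in> {undefined}" using card_facet E by fastforce
        qed
        thus ?thesis by (rule le1_single)
      next
        case V
        have "{\<nu>\<in>K. facet \<nu> \<sigma> \<and> h \<nu> \<ge> h \<sigma>} \<subseteq> {{a}}"
        proof
          fix \<nu> assume "\<nu> \<in> {\<nu>\<in>K. facet \<nu> \<sigma> \<and> h \<nu> \<ge> h \<sigma>}"
          then obtain \<mu> where m: "\<nu> = insert a \<mu>" "\<mu> = {} \<or> \<mu> \<in> C" "facet \<mu> \<rho>" using fac by blast
          have "\<mu> = {}"
          proof (rule ccontr)
            assume "\<mu> \<noteq> {}"
            hence "card \<mu> \<noteq> 0" using m(2) cellC by (simp add: card_eq_0_iff)
            thus False using card_facet[OF m(3)] V by simp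
          qed
          thus "\<nu> \<in> {{a}}" using m(1) by simp
        qed
        thus ?thesis by (rule le1_single)
      next
        case Ed
        show ?thesis
        proof (cases "\<rho> \<in> T")
          case True
          then obtain w where w: "w \<in> V" "w \<noteq> v0" "\<rho> = {w, par w}" unfolding T_def by blast
          have "{\<nu>\<in>K. facet \<nu> \<sigma> \<and> h \<nu> \<ge> h \<sigma>} \<subseteq> {insert a {w}}"
          proof
            fix \<nu> assume "\<nu> \<in> {\<nu>\<in>K. facet \<nu> \<sigma> \<and> h \<nu> \<ge> h \<sigma>}"
            then obtain \<mu> where m: "\<nu> = insert a \<mu>" "\<mu> = {} \<or> \<mu> \<in> C" "facet \<mu> \<rho>" "g1 \<mu> \<ge> g1 \<rho>"
              using fac by blast
            have "card \<mu> = 1" using card_facet[OF m(3)] Ecard[OF Ed] by simp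
            then obtain x where x: "\<mu> = {x}" by (rule card_1_singletonE)
            have "x \<in> \<rho>" using m(3) x unfolding facet_def by blast
            moreover have "g1 \<rho> \<le> 2 * d x" using m(4) x g1s by simp
            ultimately have "x \<in> V \<and> x \<noteq> v0 \<and> \<rho> = {x, par x}" using key Ed by blast
            hence "x = w" using injT w by blast
            thus "\<nu> \<in> {insert a {w}}" using m(1) x by simp
          qed
          thus ?thesis by (rule le1_single)
        next
          case False
          have "{\<nu>\<in>K. facet \<nu> \<sigma> \<and> h \<nu> \<ge> h \<sigma>} \<subseteq> {undefined}"
          proof
            fix \<nu> assume "\<nu> \<in> {\<nu>\<in>K. facet \<nu> \<sigma> \<and> h \<nu> \<ge> h \<sigma>}"
            then obtain \<mu> where m: "\<nu> = insert a \<mu>" "\<mu> = {} \<or> \<mu> \<in> C" "facet \<mu> \<rho>" "g1 \<mu> \<ge> g1 \<rho>"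
              using fac by blast
            have "card \<mu> = 1" using card_facet[OF m(3)] Ecard[OF Ed] by simp
            then obtain x where x: "\<mu> = {x}" by (rule card_1_singletonE)
            have "x \<in> \<rho>" using m(3) x unfolding facet_def by blast
            moreover have "g1 \<rho> \<le> 2 * d x" using m(4) x g1s by simp
            ultimately have "x \<in> V \<and> x \<noteq> v0 \<and> \<rho> = {x, par x}" using key Ed by blast
            hence "\<rho> \<in> T" unfolding T_def by blast
            thus "\<nu> \<in> {undefined}" using False by blast
          qed
          thus ?thesis by (rule le1_single)
        qed
      qed
    qed
  qed
  have e0C: "e0 \<in> C" "card e0 = 2" using e0E EC Ecard by blast+
  have ae0: "a \<notin> e0" using aV e0C by blast
  have insinj: "X = Y" if "insert a X = insert a Y" "a \<notin> X" "a \<notin> Y" for X Y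
    using that by (metis Diff_insert_absorb)
  have crit: "critical K h \<sigma> \<longleftrightarrow> (\<sigma> \<in> A \<and> critical M f \<sigma>) \<or> \<sigma> = insert a e0" if "\<sigma> \<in> K" for \<sigma>
  proof -
    from K_cases[OF that] consider (A) "a \<notin> \<sigma>" "\<sigma> \<in> A"
      | (Co) \<rho> where "\<sigma> = insert a \<rho>" "a \<notin> \<rho>" "\<rho> = {} \<or> \<rho> \<in> C" by blast
    thus ?thesis
    proof cases
      case A
      have ne: "\<sigma> \<noteq> insert a e0" using A(1) by blast
      have sM: "\<sigma> \<in> M" using A(2) AM by blast
      have "critical K h \<sigma> \<longleftrightarrow> critical M f \<sigma>"
      proof
        assume cK: "critical K h \<sigma>"
        show "critical M f \<sigma>" unfolding critical_def
        proof (intro conjI ballI impI)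
          show "\<sigma> \<in> M" by fact
        next
          fix \<tau> assume \<tau>: "\<tau> \<in> M" "facet \<sigma> \<tau>"
          show "f \<sigma> < f \<tau>"
          proof (cases "\<tau> \<in> A")
            case True
            hence "\<tau> \<in> K" by blast
            hence "h \<sigma> < h \<tau>" using cK \<tau>(2) unfolding critical_def by blast
            thus ?thesis using hA True A(2) by simp
          next
            case False
            hence sC: "\<sigma> \<in> C" using sub A(2) \<tau> by blast
            show ?thesis
            proof (rule ccontr)
              assume "\<not> f \<sigma> < f \<tau>"
              hence "(\<sigma>, \<tau>) \<in> gradient M f" unfolding grad_iff using sM \<tau> by simp
              hence "\<tau> \<in> A" using noarr sC by blast
              thus False using False by blast
            qed
          qed
        next
          fix \<nu> assume \<nu>: "\<nu> \<in> M" "facet \<nu> \<sigma>"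
          have nA: "\<nu> \<in> A" using faces_M[OF A(2) \<nu>] .
          hence "\<nu> \<in> K" by blast
          hence "h \<nu> < h \<sigma>" using cK \<nu>(2) unfolding critical_def by blast
          thus "f \<nu> < f \<sigma>" using hA nA A(2) by simp
        qed
      next
        assume cM: "critical M f \<sigma>"
        show "critical K h \<sigma>" unfolding critical_def
        proof (intro conjI ballI impI)
          show "\<sigma> \<in> K" by fact
        next
          fix \<tau> assume \<tau>: "\<tau> \<in> K" "facet \<sigma> \<tau>"
          from cofaces_A[OF A(2) \<tau>] show "h \<sigma> < h \<tau>"
          proof
            assume hh: "a \<notin> \<tau> \<and> \<tau> \<in> A"
            hence "\<tau> \<in> M" using AM by blast
            hence "f \<sigma> < f \<tau>" using cM \<tau>(2) unfolding critical_def by blast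
            thus ?thesis using hA hh A(2) by simp
          next
            assume hh: "\<sigma> \<in> C \<and> \<tau> = insert a \<sigma>"
            thus ?thesis using hAlt[OF A(2) A(1)] by simp
          qed
        next
          fix \<nu> assume \<nu>: "\<nu> \<in> K" "facet \<nu> \<sigma>"
          have nA: "\<nu> \<in> A" using faces_A[OF A(2) \<nu>] by blast
          hence "\<nu> \<in> M" using AM by blast
          hence "f \<nu> < f \<sigma>" using cM \<nu>(2) unfolding critical_def by blast
          thus "h \<nu> < h \<sigma>" using hA nA A(2) by simp
        qed
      qed
      thus ?thesis using ne A(2) by blast
    next
      case Co
      have hs: "h \<sigma> = B + 1 + real (g1 \<rho>)" using hI Co(1,2) by simp
      have nA: "\<sigma> \<notin> A" using Co(1) cellA by blast
      have frho: "finite \<rho>" using Co(3) cellC by blast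
      consider (E) "\<rho> = {}" | (V) v where "v \<in> V" "\<rho> = {v}" | (Ed) "\<rho> \<in> E"
        using Co(3) cellsC by blast
      thus ?thesis
      proof cases
        case E
        have "\<sigma> \<noteq> insert a e0"
        proof
          assume "\<sigma> = insert a e0"
          hence "e0 = {}" using insinj[of "{}" e0] Co(1) E ae0 by simp
          thus False using e0C by simp
        qed
        moreover have "\<not> critical K h \<sigma>"
        proof -
          have v0C: "{v0} \<in> C" using sing v0 by blast
          hence "insert a {v0} \<in> K" using K_ins by blast
          moreover have "facet \<sigma> (insert a {v0})"
            using facet_ins_iff[of a "{}" "{v0}"] aV[OF v0C] Co(1) E unfolding facet_def by simp
          moreover have "h (insert a {v0}) \<le> h \<sigma>" using hI[OF aV[OF v0C]] hs E g1s d0 unfolding g1_def by simp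
          ultimately show ?thesis unfolding critical_def by force
        qed
        ultimately show ?thesis using nA by blast
      next
        case V
        have "\<sigma> \<noteq> insert a e0"
        proof
          assume "\<sigma> = insert a e0"
          hence "e0 = {v}" using insinj[of "{v}" e0] Co(1,2) V ae0 by simp
          thus False using e0C by simp
        qed
        moreover have "\<not> critical K h \<sigma>"
        proof (cases "v = v0")
          case True
          have "{a} \<in> K" using K_ins by blast
          moreover have "facet {a} \<sigma>" using Co(1,2) V unfolding facet_def by auto
          moreover have "h {a} \<ge> h \<sigma>" using hI[of "{}"] hs V g1s d0 True unfolding g1_def by simp
          ultimately show ?thesis unfolding critical_def by force
        next
          case False
          have pC: "{v, par v} \<in> C" "a \<notin> {v, par v}" using pE[OF V(1) False] EC aV by blast+
          hence "insert a {v, par v} \<in> K" using K_ins by blast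
          moreover have "facet \<sigma> (insert a {v, par v})"
          proof -
            have "par v \<noteq> v" using dp V(1) False by blast
            hence "facet {v} {v, par v}" unfolding facet_def by simp
            thus ?thesis using facet_ins_iff[of a "{v}" "{v, par v}"] pC(2) Co(1) V by simp
          qed
          moreover have "h (insert a {v, par v}) \<le> h \<sigma>" using hI[OF pC(2)] hs V g1s g1p[OF V(1) False] by simp
          ultimately show ?thesis unfolding critical_def by force
        qed
        ultimately show ?thesis using nA by blast
      next
        case Ed
        show ?thesis
        proof (cases "\<rho> \<in> T")
          case True
          then obtain w where w: "w \<in> V" "w \<noteq> v0" "\<rho> = {w, par w}" unfolding T_def by blast
          have "\<sigma> \<noteq> insert a e0"
          proof
            assume "\<sigma> = insert a e0"
            hence "\<rho> = e0" using insinj Co(1,2) ae0 by blast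
            thus False using True e0E by blast
          qed
          moreover have "\<not> critical K h \<sigma>"
          proof -
            have wC: "{w} \<in> C" using sing w by blast
            hence "insert a {w} \<in> K" using K_ins by blast
            moreover have "facet (insert a {w}) \<sigma>"
            proof -
              have "par w \<noteq> w" using dp w by blast
              hence "facet {w} \<rho>" using w(3) unfolding facet_def by simp
              thus ?thesis using facet_ins_iff[of a "{w}" \<rho>] Co(1,2) frho aV[OF wC] by simp
            qed
            moreover have "h (insert a {w}) \<ge> h \<sigma>" using hI[OF aV[OF wC]] hs g1s g1p[OF w(1,2)] w(3) by simp
            ultimately show ?thesis unfolding critical_def by force
          qed
          ultimately show ?thesis using nA by blast
        next
          case False
          hence re: "\<rho> = e0" using e0 Ed by blast
          have "critical K h \<sigma>" unfolding critical_def
          proof (intro conjI ballI impI)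
            show "\<sigma> \<in> K" by fact
          next
            fix \<tau> assume \<tau>: "\<tau> \<in> K" "facet \<sigma> \<tau>"
            obtain \<rho>' where r: "\<rho>' \<in> C" "\<tau> = insert a \<rho>'" "facet \<rho> \<rho>'"
              using cofaces_cone[OF Co(3) \<tau>(1)] \<tau>(2) Co(1) by blast
            have "card \<rho>' = Suc 2" using card_facet[OF r(3)] Ecard[OF Ed] by simp
            thus "h \<sigma> < h \<tau>" using Ecard3 r(1) by blast
          next
            fix \<nu> assume \<nu>: "\<nu> \<in> K" "facet \<nu> \<sigma>"
            have "facet \<nu> (insert a \<rho>)" using \<nu>(2) Co(1) by simp
            from faces_cone[OF Co(3) \<nu>(1) this] show "h \<nu> < h \<sigma>"
            proof
              assume hh: "\<nu> = \<rho> \<and> \<rho> \<in> C"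
              thus ?thesis using hAlt[of \<rho> \<rho>] Co(1,2) CA by blast
            next
              assume "\<exists>\<mu>. \<nu> = insert a \<mu> \<and> (\<mu> = {} \<or> \<mu> \<in> C) \<and> facet \<mu> \<rho>"
              then obtain \<mu> where m: "\<nu> = insert a \<mu>" "\<mu> = {} \<or> \<mu> \<in> C" "facet \<mu> \<rho>" by blast
              have "card \<mu> = 1" using card_facet[OF m(3)] Ecard[OF Ed] by simp
              then obtain x where x: "\<mu> = {x}" by (rule card_1_singletonE)
              have "x \<in> \<rho>" using m(3) x unfolding facet_def by blast
              have "\<not> g1 \<rho> \<le> 2 * d x"
              proof
                assume "g1 \<rho> \<le> 2 * d x"
                hence "x \<in> V \<and> x \<noteq> v0 \<and> \<rho> = {x, par x}" using key Ed \<open>x \<in> \<rho>\<close> by blast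
                hence "\<rho> \<in> T" unfolding T_def by blast
                thus False using False by blast
              qed
              moreover have "a \<notin> \<mu>" using x m(2) aV by blast
              ultimately show ?thesis using hI m(1) hs x g1s by simp
            qed
          qed
          thus ?thesis using re Co(1) by blast
        qed
      qed
    qed
  qed
  have "discrete_morse K h" unfolding discrete_morse_def using up_le dn_le by blast
  thus ?thesis using hA' crit e0C by blast
qed

end



context spl begin

lemma side2:
  assumes noarr: "\<forall>\<sigma>\<in>C. \<forall>\<tau>\<in>A. ((\<sigma>, \<tau>) \<in> gradient M f \<or> (\<tau>, \<sigma>) \<in> gradient M f) \<longrightarrow> \<tau> \<in> C"
  shows "\<exists>g. discrete_morse K g \<and> (\<forall>\<sigma>\<in>A. g \<sigma> = f \<sigma>) \<and>
     (\<forall>\<sigma>\<in>K. critical K g \<sigma> \<longleftrightarrow> (\<sigma> \<in> A \<and> \<sigma> \<notin> C \<and> critical M f \<sigma>) \<or> \<sigma> = {a})"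
proof -
  define B where "B = (\<Sum>\<sigma>\<in>M. \<bar>f \<sigma>\<bar>)"
  have bnd: "\<sigma> \<in> M \<Longrightarrow> \<bar>f \<sigma>\<bar> \<le> B" for \<sigma> unfolding B_def by (rule boundB)
  define P where "P = {(\<nu>,\<rho>). \<nu> \<in> C \<and> \<rho> \<in> C \<and> facet \<nu> \<rho> \<and> f \<nu> < f \<rho>}"
  define S where "S = (\<lambda>(\<nu>,\<rho>). f \<rho> - f \<nu>) ` P"
  have "P \<subseteq> C \<times> C" unfolding P_def by blast
  hence "finite P" using finC by (meson finite_SigmaI finite_subset)
  hence "finite S" unfolding S_def by blast
  moreover have "\<forall>x\<in>S. x > 0" unfolding S_def P_def by auto
  ultimately obtain c where c: "c > 0" "\<forall>x\<in>S. c < x" using pos_below by blast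
  have gap: "c < f \<rho> - f \<nu>" if "\<nu> \<in> C" "\<rho> \<in> C" "facet \<nu> \<rho>" "f \<nu> < f \<rho>" for \<nu> \<rho>
  proof -
    have "(\<nu>,\<rho>) \<in> P" unfolding P_def using that by blast
    hence "f \<rho> - f \<nu> \<in> S" unfolding S_def by force
    thus ?thesis using c(2) by blast
  qed
  define mt where "mt \<rho> \<longleftrightarrow> (\<exists>\<tau>\<in>C. (\<rho>, \<tau>) \<in> gradient M f \<or> (\<tau>, \<rho>) \<in> gradient M f)" for \<rho>
  define G where "G \<rho> = (if \<rho> = {} then -B-1 else f \<rho> + (if mt \<rho> then c else 0))" for \<rho>
  define g where "g \<sigma> = (if a \<in> \<sigma> then G (\<sigma> - {a}) else f \<sigma>)" for \<sigma>
  have gA: "g \<sigma> = f \<sigma>" if "\<sigma> \<in> A" for \<sigma>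
  proof -
    have "a \<notin> \<sigma>" using that cellA by blast
    thus ?thesis unfolding g_def by simp
  qed
  have gI: "g (insert a \<rho>) = G \<rho>" if "a \<notin> \<rho>" for \<rho>
    unfolding g_def using that by simp
  have Gge: "G \<rho> \<ge> f \<rho> \<and> G \<rho> > -B-1" if "\<rho> \<in> C" for \<rho>
  proof -
    have "\<rho> \<noteq> {}" "\<rho> \<in> M" using that cellC by blast+
    moreover hence "f \<rho> \<ge> -B" using bnd by force
    ultimately show ?thesis unfolding G_def using c(1) by auto
  qed
  have G0: "G {} = -B-1" unfolding G_def by simp
  have inM: "\<rho> \<in> M" if "\<rho> \<in> C" for \<rho> using that cellC by blast
  have key: "G \<rho> \<le> G \<nu> \<longleftrightarrow> (\<nu>, \<rho>) \<in> gradient M f" if "\<nu> \<in> C" "\<rho> \<in> C" "facet \<nu> \<rho>" for \<nu> \<rho>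
  proof (cases "(\<nu>, \<rho>) \<in> gradient M f")
    case True
    hence "mt \<nu>" "mt \<rho>" unfolding mt_def using that by blast+
    moreover have "f \<rho> \<le> f \<nu>" using True unfolding grad_iff by blast
    moreover have "\<nu> \<noteq> {}" "\<rho> \<noteq> {}" using that cellC by blast+
    ultimately show ?thesis using True unfolding G_def by simp
  next
    case False
    hence lt: "f \<nu> < f \<rho>" using that inM unfolding grad_iff by auto
    have "G \<nu> < G \<rho>"
    proof (cases "mt \<nu>")
      case True
      have "\<nu> \<noteq> {}" using that cellC by blast
      hence "G \<nu> = f \<nu> + c" unfolding G_def using True by simp
      thus ?thesis using gap[OF that lt] Gge[OF that(2)] by linarith
    next
      case False
      have "\<nu> \<noteq> {}" using that cellC by blast
      hence "G \<nu> = f \<nu>" unfolding G_def using False by simp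
      thus ?thesis using lt Gge[OF that(2)] by linarith
    qed
    thus ?thesis using False by simp
  qed
  have key2: "G \<rho> \<le> f \<rho> \<longleftrightarrow> \<not> mt \<rho>" if "\<rho> \<in> C" for \<rho>
  proof -
    have "\<rho> \<noteq> {}" using that cellC by blast
    thus ?thesis unfolding G_def using c(1) by simp
  qed
  have mtI: "mt \<sigma>" if "\<sigma> \<in> C" "\<tau> \<in> A" "(\<sigma>, \<tau>) \<in> gradient M f \<or> (\<tau>, \<sigma>) \<in> gradient M f" for \<sigma> \<tau>
  proof -
    have "\<tau> \<in> C" using noarr that by blast
    thus ?thesis unfolding mt_def using that(3) by blast
  qed
  have gA': "\<forall>\<sigma>\<in>A. g \<sigma> = f \<sigma>" using gA by blast
  have up_le: "card {\<tau>\<in>K. facet \<sigma> \<tau> \<and> g \<tau> \<le> g \<sigma>} \<le> 1" if "\<sigma> \<in> K" for \<sigma>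
  proof -
    from K_cases[OF that] consider (A) "a \<notin> \<sigma>" "\<sigma> \<in> A"
      | (Co) \<rho> where "\<sigma> = insert a \<rho>" "a \<notin> \<rho>" "\<rho> = {} \<or> \<rho> \<in> C" by blast
    thus ?thesis
    proof cases
      case A
      show ?thesis
      proof (cases "\<sigma> \<in> C \<and> \<not> mt \<sigma>")
        case True
        have "{\<tau>\<in>K. facet \<sigma> \<tau> \<and> g \<tau> \<le> g \<sigma>} \<subseteq> {insert a \<sigma>}"
        proof
          fix \<tau> assume "\<tau> \<in> {\<tau>\<in>K. facet \<sigma> \<tau> \<and> g \<tau> \<le> g \<sigma>}"
          hence \<tau>: "\<tau> \<in> K" "facet \<sigma> \<tau>" "g \<tau> \<le> g \<sigma>" by blast+
          from cofaces_A[OF A(2) \<tau>(1,2)] show "\<tau> \<in> {insert a \<sigma>}"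
          proof
            assume h: "a \<notin> \<tau> \<and> \<tau> \<in> A"
            hence "f \<tau> \<le> f \<sigma>" using \<tau>(3) gA A(2) by simp
            moreover have "\<tau> \<in> M" "\<sigma> \<in> M" using h A(2) AM by blast+
            ultimately have "(\<sigma>, \<tau>) \<in> gradient M f" using \<tau>(2) unfolding grad_iff by blast
            hence "mt \<sigma>" using mtI True h by blast
            thus ?thesis using True by blast
          qed simp
        qed
        thus ?thesis by (rule le1_single)
      next
        case False
        have "{\<tau>\<in>K. facet \<sigma> \<tau> \<and> g \<tau> \<le> g \<sigma>} \<subseteq> upM \<sigma>"
        proof
          fix \<tau> assume "\<tau> \<in> {\<tau>\<in>K. facet \<sigma> \<tau> \<and> g \<tau> \<le> g \<sigma>}"
          hence \<tau>: "\<tau> \<in> K" "facet \<sigma> \<tau>" "g \<tau> \<le> g \<sigma>" by blast+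
          from cofaces_A[OF A(2) \<tau>(1,2)] show "\<tau> \<in> upM \<sigma>"
          proof
            assume h: "a \<notin> \<tau> \<and> \<tau> \<in> A"
            hence "f \<tau> \<le> f \<sigma>" using \<tau>(3) gA A(2) by simp
            moreover have "\<tau> \<in> M" using h AM by blast
            ultimately show ?thesis unfolding upM_def using \<tau>(2) by blast
          next
            assume h: "\<sigma> \<in> C \<and> \<tau> = insert a \<sigma>"
            hence "G \<sigma> \<le> f \<sigma>" using \<tau>(3) gI A(1) gA A(2) by simp
            hence "\<not> mt \<sigma>" using key2 h by blast
            thus ?thesis using h False by blast
          qed
        qed
        moreover have "\<sigma> \<in> M" using A(2) AM by blast
        ultimately show ?thesis using upM_le1 upM_fin card_mono le_trans by metis
      qed
    next
      case Co
      have gs: "g \<sigma> = G \<rho>" using gI Co(1,2) by simp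
      show ?thesis
      proof (cases "\<rho> = {}")
        case True
        have "{\<tau>\<in>K. facet \<sigma> \<tau> \<and> g \<tau> \<le> g \<sigma>} \<subseteq> {}"
        proof
          fix \<tau> assume "\<tau> \<in> {\<tau>\<in>K. facet \<sigma> \<tau> \<and> g \<tau> \<le> g \<sigma>}"
          hence \<tau>: "\<tau> \<in> K" "facet (insert a \<rho>) \<tau>" "g \<tau> \<le> g \<sigma>" using Co(1) by blast+
          obtain \<rho>' where r: "\<rho>' \<in> C" "\<tau> = insert a \<rho>'" "facet \<rho> \<rho>'"
            using cofaces_cone[OF Co(3) \<tau>(1,2)] by blast
          have "a \<notin> \<rho>'" using r(1) cellC by blast
          hence "g \<tau> = G \<rho>'" using gI r(2) by simp
          thus "\<tau> \<in> {}" using Gge[OF r(1)] \<tau>(3) gs G0 True by simp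
        qed
        hence "{\<tau>\<in>K. facet \<sigma> \<tau> \<and> g \<tau> \<le> g \<sigma>} \<subseteq> {undefined}" by (rule order_trans) simp
        thus ?thesis by (rule le1_single)
      next
        case False
        hence rC: "\<rho> \<in> C" using Co(3) by blast
        have "{\<tau>\<in>K. facet \<sigma> \<tau> \<and> g \<tau> \<le> g \<sigma>} \<subseteq> insert a ` upM \<rho>"
        proof
          fix \<tau> assume "\<tau> \<in> {\<tau>\<in>K. facet \<sigma> \<tau> \<and> g \<tau> \<le> g \<sigma>}"
          hence \<tau>: "\<tau> \<in> K" "facet (insert a \<rho>) \<tau>" "g \<tau> \<le> g \<sigma>" using Co(1) by blast+
          obtain \<rho>' where r: "\<rho>' \<in> C" "\<tau> = insert a \<rho>'" "facet \<rho> \<rho>'"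
            using cofaces_cone[OF Co(3) \<tau>(1,2)] by blast
          have "a \<notin> \<rho>'" using r(1) cellC by blast
          hence "G \<rho>' \<le> G \<rho>" using gI r(2) \<tau>(3) gs by simp
          hence "(\<rho>, \<rho>') \<in> gradient M f" using key[OF rC r(1) r(3)] by blast
          hence "\<rho>' \<in> upM \<rho>" unfolding upM_def grad_iff by blast
          thus "\<tau> \<in> insert a ` upM \<rho>" using r(2) by blast
        qed
        moreover have "\<rho> \<in> M" using rC inM by blast
        ultimately show ?thesis using le1_sub upM_fin upM_le1 by blast
      qed
    qed
  qed
  have dn_le: "card {\<nu>\<in>K. facet \<nu> \<sigma> \<and> g \<nu> \<ge> g \<sigma>} \<le> 1" if "\<sigma> \<in> K" for \<sigma>
  proof -
    from K_cases[OF that] consider (A) "a \<notin> \<sigma>" "\<sigma> \<in> A"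
      | (Co) \<rho> where "\<sigma> = insert a \<rho>" "a \<notin> \<rho>" "\<rho> = {} \<or> \<rho> \<in> C" by blast
    thus ?thesis
    proof cases
      case A
      have "{\<nu>\<in>K. facet \<nu> \<sigma> \<and> g \<nu> \<ge> g \<sigma>} \<subseteq> downM \<sigma>"
      proof
        fix \<nu> assume "\<nu> \<in> {\<nu>\<in>K. facet \<nu> \<sigma> \<and> g \<nu> \<ge> g \<sigma>}"
        hence \<nu>: "\<nu> \<in> K" "facet \<nu> \<sigma>" "g \<nu> \<ge> g \<sigma>" by blast+
        have h: "\<nu> \<in> A" using faces_A[OF A(2) \<nu>(1,2)] by blast
        hence "f \<nu> \<ge> f \<sigma>" using \<nu>(3) gA A(2) by simp
        moreover have "\<nu> \<in> M" using h AM by blast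
        ultimately show "\<nu> \<in> downM \<sigma>" unfolding downM_def using \<nu>(2) by blast
      qed
      moreover have "\<sigma> \<in> M" using A(2) AM by blast
      ultimately show ?thesis using downM_le1 downM_fin card_mono le_trans by metis
    next
      case Co
      have gs: "g \<sigma> = G \<rho>" using gI Co(1,2) by simp
      show ?thesis
      proof (cases "\<rho> = {}")
        case True
        have "{\<nu>\<in>K. facet \<nu> \<sigma> \<and> g \<nu> \<ge> g \<sigma>} \<subseteq> {}"
        proof
          fix \<nu> assume "\<nu> \<in> {\<nu>\<in>K. facet \<nu> \<sigma> \<and> g \<nu> \<ge> g \<sigma>}"
          hence \<nu>: "\<nu> \<in> K" "facet \<nu> (insert a \<rho>)" using Co(1) by blast+
          have "{} \<notin> C" using cellC by blast
          moreover have "\<not> facet \<mu> {}" for \<mu> :: "'a set" unfolding facet_def by simp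
          ultimately show "\<nu> \<in> {}" using faces_cone[OF Co(3) \<nu>] True by blast
        qed
        hence "{\<nu>\<in>K. facet \<nu> \<sigma> \<and> g \<nu> \<ge> g \<sigma>} \<subseteq> {undefined}" by (rule order_trans) simp
        thus ?thesis by (rule le1_single)
      next
        case False
        hence rC: "\<rho> \<in> C" using Co(3) by blast
        have aux: "(\<mu>, \<rho>) \<in> gradient M f \<and> \<mu> \<in> C" if "\<nu> \<in> K" "\<nu> = insert a \<mu>" "\<mu> = {} \<or> \<mu> \<in> C"
          "facet \<mu> \<rho>" "g \<nu> \<ge> g \<sigma>" for \<nu> \<mu>
        proof (cases "\<mu> = {}")
          case True
          hence "g \<nu> = -B-1" using that(2) gI G0 by simp
          thus ?thesis using that(5) gs Gge[OF rC] by simp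
        next
          case False
          hence mC: "\<mu> \<in> C" using that(3) by blast
          hence "a \<notin> \<mu>" using cellC by blast
          hence "G \<rho> \<le> G \<mu>" using that(2,5) gI gs by simp
          thus ?thesis using key[OF mC rC that(4)] mC by blast
        qed
        show ?thesis
        proof (cases "mt \<rho>")
          case False
          have "{\<nu>\<in>K. facet \<nu> \<sigma> \<and> g \<nu> \<ge> g \<sigma>} \<subseteq> {\<rho>}"
          proof
            fix \<nu> assume "\<nu> \<in> {\<nu>\<in>K. facet \<nu> \<sigma> \<and> g \<nu> \<ge> g \<sigma>}"
            hence \<nu>: "\<nu> \<in> K" "facet \<nu> (insert a \<rho>)" "g \<nu> \<ge> g \<sigma>" using Co(1) by blast+
            from faces_cone[OF Co(3) \<nu>(1,2)] show "\<nu> \<in> {\<rho>}"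
            proof
              assume "\<exists>\<mu>. \<nu> = insert a \<mu> \<and> (\<mu> = {} \<or> \<mu> \<in> C) \<and> facet \<mu> \<rho>"
              then obtain \<mu> where m: "\<nu> = insert a \<mu>" "\<mu> = {} \<or> \<mu> \<in> C" "facet \<mu> \<rho>" by blast
              have "(\<mu>, \<rho>) \<in> gradient M f \<and> \<mu> \<in> C" using aux[OF \<nu>(1) m \<nu>(3)] .
              hence "mt \<rho>" unfolding mt_def by blast
              thus ?thesis using False by blast
            qed simp
          qed
          thus ?thesis by (rule le1_single)
        next
          case True
          have "{\<nu>\<in>K. facet \<nu> \<sigma> \<and> g \<nu> \<ge> g \<sigma>} \<subseteq> insert a ` downM \<rho>"
          proof
            fix \<nu> assume "\<nu> \<in> {\<nu>\<in>K. facet \<nu> \<sigma> \<and> g \<nu> \<ge> g \<sigma>}"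
            hence \<nu>: "\<nu> \<in> K" "facet \<nu> (insert a \<rho>)" "g \<nu> \<ge> g \<sigma>" using Co(1) by blast+
            from faces_cone[OF Co(3) \<nu>(1,2)] show "\<nu> \<in> insert a ` downM \<rho>"
            proof
              assume h: "\<nu> = \<rho> \<and> \<rho> \<in> C"
              hence "g \<nu> = f \<rho>" using gA rC cellC by blast
              hence "G \<rho> \<le> f \<rho>" using \<nu>(3) gs by simp
              hence "\<not> mt \<rho>" using key2[OF rC] by blast
              thus ?thesis using True by blast
            next
              assume "\<exists>\<mu>. \<nu> = insert a \<mu> \<and> (\<mu> = {} \<or> \<mu> \<in> C) \<and> facet \<mu> \<rho>"
              then obtain \<mu> where m: "\<nu> = insert a \<mu>" "\<mu> = {} \<or> \<mu> \<in> C" "facet \<mu> \<rho>" by blast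
              have "(\<mu>, \<rho>) \<in> gradient M f \<and> \<mu> \<in> C" using aux[OF \<nu>(1) m \<nu>(3)] .
              hence "\<mu> \<in> downM \<rho>" unfolding downM_def grad_iff by blast
              thus ?thesis using m(1) by blast
            qed
          qed
          moreover have "\<rho> \<in> M" using rC inM by blast
          ultimately show ?thesis using le1_sub downM_fin downM_le1 by blast
        qed
      qed
    qed
  qed
  have crit: "critical K g \<sigma> \<longleftrightarrow> (\<sigma> \<in> A \<and> \<sigma> \<notin> C \<and> critical M f \<sigma>) \<or> \<sigma> = {a}" if "\<sigma> \<in> K" for \<sigma>
  proof -
    from K_cases[OF that] consider (A) "a \<notin> \<sigma>" "\<sigma> \<in> A"
      | (Co) \<rho> where "\<sigma> = insert a \<rho>" "a \<notin> \<rho>" "\<rho> = {} \<or> \<rho> \<in> C" by blast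
    thus ?thesis
    proof cases
      case A
      have ne: "\<sigma> \<noteq> {a}" using A(1) by blast
      show ?thesis
      proof (cases "\<sigma> \<in> C")
        case False
        thus ?thesis using crit_A_iff[OF A(2) False gA'] ne A(2) by blast
      next
        case True
        have "\<not> critical K g \<sigma>"
        proof (cases "mt \<sigma>")
          case True
          then obtain \<tau> where \<tau>: "\<tau> \<in> C" "(\<sigma>, \<tau>) \<in> gradient M f \<or> (\<tau>, \<sigma>) \<in> gradient M f"
            unfolding mt_def by blast
          have tA: "\<tau> \<in> A" "\<tau> \<in> K" using \<tau>(1) CA by blast+
          have "g \<tau> = f \<tau>" "g \<sigma> = f \<sigma>" using gA tA A(2) by blast+
          thus ?thesis using \<tau>(2) tA(2) unfolding critical_def grad_iff by force
        next
          case False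
          have fin: "finite \<sigma>" using A(2) cellA by blast
          have "insert a \<sigma> \<in> K" using K_ins \<open>\<sigma> \<in> C\<close> by blast
          moreover have "facet \<sigma> (insert a \<sigma>)" using facet_ins_self[OF A(1) fin] .
          moreover have "g (insert a \<sigma>) \<le> g \<sigma>" using gI[OF A(1)] gA[OF A(2)] key2[OF \<open>\<sigma> \<in> C\<close>] False by simp
          ultimately show ?thesis unfolding critical_def by force
        qed
        thus ?thesis using True ne by blast
      qed
    next
      case Co
      have gs: "g \<sigma> = G \<rho>" using gI Co(1,2) by simp
      show ?thesis
      proof (cases "\<rho> = {}")
        case True
        have "critical K g \<sigma>"
          unfolding critical_def
        proof (intro conjI ballI impI)
          show "\<sigma> \<in> K" by fact
        next
          fix \<tau> assume \<tau>: "\<tau> \<in> K" "facet \<sigma> \<tau>"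
          obtain \<rho>' where r: "\<rho>' \<in> C" "\<tau> = insert a \<rho>'" "facet \<rho> \<rho>'"
            using cofaces_cone[OF Co(3) \<tau>(1)] \<tau>(2) Co(1) by blast
          have "a \<notin> \<rho>'" using r(1) cellC by blast
          hence "g \<tau> = G \<rho>'" using gI r(2) by simp
          thus "g \<sigma> < g \<tau>" using Gge[OF r(1)] gs G0 True by simp
        next
          fix \<nu> assume \<nu>: "\<nu> \<in> K" "facet \<nu> \<sigma>"
          have "{} \<notin> C" using cellC by blast
          moreover have "\<not> facet \<mu> {}" for \<mu> :: "'a set" unfolding facet_def by simp
          ultimately show "g \<nu> < g \<sigma>" using faces_cone[OF Co(3) \<nu>(1)] \<nu>(2) Co(1) True by blast
        qed
        moreover have "\<sigma> = {a}" using Co(1) True by simp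
        ultimately show ?thesis by blast
      next
        case False
        hence rC: "\<rho> \<in> C" using Co(3) by blast
        have rhs: "\<not> ((\<sigma> \<in> A \<and> \<sigma> \<notin> C \<and> critical M f \<sigma>) \<or> \<sigma> = {a})"
        proof -
          have "a \<in> \<sigma>" using Co(1) by blast
          hence "\<sigma> \<notin> A" using cellA by blast
          moreover have "\<sigma> \<noteq> {a}" using Co(1,2) False by blast
          ultimately show ?thesis by blast
        qed
        have fr: "finite \<rho>" using rC cellC by blast
        have "\<not> critical K g \<sigma>"
        proof (cases "mt \<rho>")
          case True
          then obtain \<tau> where \<tau>: "\<tau> \<in> C" "(\<rho>, \<tau>) \<in> gradient M f \<or> (\<tau>, \<rho>) \<in> gradient M f"
            unfolding mt_def by blast
          have at: "a \<notin> \<tau>" "finite \<tau>" using \<tau>(1) cellC by blast+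
          have tK: "insert a \<tau> \<in> K" using K_ins \<tau>(1) by blast
          have gt: "g (insert a \<tau>) = G \<tau>" using gI at by simp
          from \<tau>(2) show ?thesis
          proof
            assume h: "(\<rho>, \<tau>) \<in> gradient M f"
            hence "facet \<rho> \<tau>" unfolding grad_iff by blast
            hence "facet \<sigma> (insert a \<tau>)" using facet_ins_iff[OF Co(2) at(1) at(2) fr] Co(1) by blast
            moreover have "G \<tau> \<le> G \<rho>" using key[OF rC \<tau>(1) \<open>facet \<rho> \<tau>\<close>] h by blast
            ultimately show ?thesis using tK gt gs unfolding critical_def by force
          next
            assume h: "(\<tau>, \<rho>) \<in> gradient M f"
            hence "facet \<tau> \<rho>" unfolding grad_iff by blast
            hence "facet (insert a \<tau>) \<sigma>" using facet_ins_iff[OF at(1) Co(2) fr at(2)] Co(1) by blast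
            moreover have "G \<rho> \<le> G \<tau>" using key[OF \<tau>(1) rC \<open>facet \<tau> \<rho>\<close>] h by blast
            ultimately show ?thesis using tK gt gs unfolding critical_def by force
          qed
        next
          case False
          have "\<rho> \<in> K" using rC CA by blast
          moreover have "facet \<rho> \<sigma>" using facet_ins_self[OF Co(2) fr] Co(1) by simp
          moreover have "g \<rho> \<ge> g \<sigma>" using gA rC CA gs key2[OF rC] False by force
          ultimately show ?thesis unfolding critical_def by force
        qed
        thus ?thesis using rhs by blast
      qed
    qed
  qed
  have "discrete_morse K g" unfolding discrete_morse_def using up_le dn_le by blast
  thus ?thesis using gA' crit by blast
qed

end



theorem theorem4p4:
  fixes M A1 A2 C :: "'a set set" and f :: "'a set \<Rightarrow> real" and a1 a2 :: 'a
  assumes M: "closed_oriented_surface M"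
    and C: "simple_closed_curve C" "C \<subseteq> M"
    and A: "simplicial_complex A1" "simplicial_complex A2"
           "A1 \<union> A2 = M" "A1 \<inter> A2 = C"
    and apex: "a1 \<notin> verts M" "a2 \<notin> verts M"
    and S1: "closed_oriented_surface (A1 \<union> cone a1 C)"
    and S2: "closed_oriented_surface (A2 \<union> cone a2 C)"
    and perf: "perfect_surface_dmf M f"
    and cv: "crit_cells M f 0 \<subseteq> A1"
    and ce1: "card (crit_cells M f 1 \<inter> A1) = 2 * genus (A1 \<union> cone a1 C)"
    and ce2: "crit_cells M f 1 - A1 \<subseteq> A2 - C"
             "card (crit_cells M f 1 - A1) = 2 * genus (A2 \<union> cone a2 C)"
    and ct: "crit_cells M f 2 \<subseteq> A2 - C"
    and noarrow: "\<forall>\<sigma>\<in>C. \<forall>\<tau>. ((\<sigma>, \<tau>) \<in> gradient M f \<or> (\<tau>, \<sigma>) \<in> gradient M f) \<longrightarrow> \<tau> \<in> A1"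
  shows "\<exists>f1 f2.
     perfect_surface_dmf (A1 \<union> cone a1 C) f1 \<and>
     perfect_surface_dmf (A2 \<union> cone a2 C) f2 \<and>
     (\<forall>\<sigma>\<in>A1. f1 \<sigma> = f \<sigma>) \<and> (\<forall>\<sigma>\<in>A2. f2 \<sigma> = f \<sigma>) \<and>
     {(\<sigma>, \<tau>) \<in> gradient M f. \<sigma> \<in> A1 \<and> \<tau> \<in> A1} \<subseteq> gradient (A1 \<union> cone a1 C) f1 \<and>
     {(\<sigma>, \<tau>) \<in> gradient M f. \<sigma> \<in> A2 \<and> \<tau> \<in> A2} \<subseteq> gradient (A2 \<union> cone a2 C) f2"
proof -
  have hM: "simplicial_complex M" using M unfolding closed_oriented_surface_def by blast
  have dmM: "discrete_morse M f" using perf unfolding perfect_surface_dmf_def by blast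
  have hC: "simplicial_complex C" using C(1) unfolding simple_closed_curve_def by blast
  have sub1: "\<forall>\<sigma>\<in>A1. \<forall>\<tau>\<in>M. facet \<sigma> \<tau> \<longrightarrow> \<tau> \<in> A1 \<or> \<sigma> \<in> C"
  proof (intro ballI impI)
    fix \<sigma> \<tau> assume h: "\<sigma> \<in> A1" "\<tau> \<in> M" "facet \<sigma> \<tau>"
    show "\<tau> \<in> A1 \<or> \<sigma> \<in> C"
    proof (cases "\<tau> \<in> A1")
      case False
      hence "\<tau> \<in> A2" using h(2) A(3) by blast
      moreover have "\<sigma> \<subseteq> \<tau>" "\<sigma> \<noteq> {}" using h A(1) unfolding facet_def simplicial_complex_def by blast+
      ultimately have "\<sigma> \<in> A2" using A(2) unfolding simplicial_complex_def by blast
      thus ?thesis using h(1) A(4) by blast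
    qed blast
  qed
  have sub2: "\<forall>\<sigma>\<in>A2. \<forall>\<tau>\<in>M. facet \<sigma> \<tau> \<longrightarrow> \<tau> \<in> A2 \<or> \<sigma> \<in> C"
  proof (intro ballI impI)
    fix \<sigma> \<tau> assume h: "\<sigma> \<in> A2" "\<tau> \<in> M" "facet \<sigma> \<tau>"
    show "\<tau> \<in> A2 \<or> \<sigma> \<in> C"
    proof (cases "\<tau> \<in> A2")
      case False
      hence "\<tau> \<in> A1" using h(2) A(3) by blast
      moreover have "\<sigma> \<subseteq> \<tau>" "\<sigma> \<noteq> {}" using h A(2) unfolding facet_def simplicial_complex_def by blast+
      ultimately have "\<sigma> \<in> A1" using A(1) unfolding simplicial_complex_def by blast
      thus ?thesis using h(1) A(4) by blast
    qed blast
  qed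
  have L1: "spl M A1 C f a1"
    unfolding spl_def using hM dmM A(1) hC A(3,4) sub1 apex(1) unfolding verts_def by blast
  have L2: "spl M A2 C f a2"
    unfolding spl_def using hM dmM A(2) hC A(3,4) sub2 apex(2) unfolding verts_def by blast
  have noarr2: "\<forall>\<sigma>\<in>C. \<forall>\<tau>\<in>A2. ((\<sigma>, \<tau>) \<in> gradient M f \<or> (\<tau>, \<sigma>) \<in> gradient M f) \<longrightarrow> \<tau> \<in> C"
    using noarrow A(4) by blast
  obtain f1 e0 where dm1: "discrete_morse (A1 \<union> cone a1 C) f1" and f1A: "\<forall>\<sigma>\<in>A1. f1 \<sigma> = f \<sigma>"
    and e0: "e0 \<in> C" "card e0 = 2"
    and cr1: "\<forall>\<sigma>\<in>A1 \<union> cone a1 C. critical (A1 \<union> cone a1 C) f1 \<sigma> \<longleftrightarrow> (\<sigma> \<in> A1 \<and> critical M f \<sigma>) \<or> \<sigma> = insert a1 e0"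
    using spl.side1[OF L1 noarrow C(1)] by blast
  obtain f2 where dm2: "discrete_morse (A2 \<union> cone a2 C) f2" and f2A: "\<forall>\<sigma>\<in>A2. f2 \<sigma> = f \<sigma>"
    and cr2: "\<forall>\<sigma>\<in>A2 \<union> cone a2 C. critical (A2 \<union> cone a2 C) f2 \<sigma> \<longleftrightarrow> (\<sigma> \<in> A2 \<and> \<sigma> \<notin> C \<and> critical M f \<sigma>) \<or> \<sigma> = {a2}"
    using spl.side2[OF L2 noarr2] by blast
  define K1 where "K1 = A1 \<union> cone a1 C"
  define K2 where "K2 = A2 \<union> cone a2 C"
  have a1e0: "a1 \<notin> e0" using apex(1) e0(1) C(2) unfolding verts_def by blast
  have fe0: "finite e0" using e0(2) card.infinite by fastforce
  have ie0: "insert a1 e0 \<in> K1" unfolding K1_def cone_def using e0(1) by blast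
  have cie0: "card (insert a1 e0) = 3" using a1e0 fe0 e0(2) by simp
  have a1A: "insert a1 e0 \<notin> A1" using apex(1) A(3) unfolding verts_def by blast
  have a2K: "{a2} \<in> K2" unfolding K2_def cone_def by blast
  have a2A: "{a2} \<notin> A2" using apex(2) A(3) unfolding verts_def by blast
  have cc0: "crit_cells K1 f1 0 = crit_cells M f 0"
  proof (intro equalityI subsetI)
    fix \<sigma> assume "\<sigma> \<in> crit_cells K1 f1 0"
    hence s: "\<sigma> \<in> K1" "card \<sigma> = 1" "critical K1 f1 \<sigma>" unfolding crit_cells_def cells_def by auto
    hence "(\<sigma> \<in> A1 \<and> critical M f \<sigma>) \<or> \<sigma> = insert a1 e0" using cr1 unfolding K1_def by blast
    hence "\<sigma> \<in> A1 \<and> critical M f \<sigma>" using s(2) cie0 by auto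
    thus "\<sigma> \<in> crit_cells M f 0" using s(2) A(3) unfolding crit_cells_def cells_def by auto
  next
    fix \<sigma> assume h: "\<sigma> \<in> crit_cells M f 0"
    hence s: "\<sigma> \<in> A1" "card \<sigma> = 1" "critical M f \<sigma>" using cv unfolding crit_cells_def cells_def by auto
    hence "\<sigma> \<in> K1" unfolding K1_def by blast
    hence "critical K1 f1 \<sigma>" using cr1 s unfolding K1_def by blast
    thus "\<sigma> \<in> crit_cells K1 f1 0" using \<open>\<sigma> \<in> K1\<close> s(2) unfolding crit_cells_def cells_def by auto
  qed
  have cc1: "crit_cells K1 f1 1 = crit_cells M f 1 \<inter> A1"
  proof (intro equalityI subsetI)
    fix \<sigma> assume "\<sigma> \<in> crit_cells K1 f1 1"
    hence s: "\<sigma> \<in> K1" "card \<sigma> = 2" "critical K1 f1 \<sigma>" unfolding crit_cells_def cells_def by auto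
    hence "(\<sigma> \<in> A1 \<and> critical M f \<sigma>) \<or> \<sigma> = insert a1 e0" using cr1 unfolding K1_def by blast
    hence "\<sigma> \<in> A1 \<and> critical M f \<sigma>" using s(2) cie0 by auto
    thus "\<sigma> \<in> crit_cells M f 1 \<inter> A1" using s(2) A(3) unfolding crit_cells_def cells_def by auto
  next
    fix \<sigma> assume h: "\<sigma> \<in> crit_cells M f 1 \<inter> A1"
    hence s: "\<sigma> \<in> A1" "card \<sigma> = 2" "critical M f \<sigma>" unfolding crit_cells_def cells_def by auto
    hence "\<sigma> \<in> K1" unfolding K1_def by blast
    hence "critical K1 f1 \<sigma>" using cr1 s unfolding K1_def by blast
    thus "\<sigma> \<in> crit_cells K1 f1 1" using \<open>\<sigma> \<in> K1\<close> s(2) unfolding crit_cells_def cells_def by auto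
  qed
  have cc2: "crit_cells K1 f1 2 = {insert a1 e0}"
  proof (intro equalityI subsetI)
    fix \<sigma> assume "\<sigma> \<in> crit_cells K1 f1 2"
    hence s: "\<sigma> \<in> K1" "card \<sigma> = 3" "critical K1 f1 \<sigma>" unfolding crit_cells_def cells_def by auto
    hence "(\<sigma> \<in> A1 \<and> critical M f \<sigma>) \<or> \<sigma> = insert a1 e0" using cr1 unfolding K1_def by blast
    moreover have "\<not> (\<sigma> \<in> A1 \<and> critical M f \<sigma>)"
    proof
      assume "\<sigma> \<in> A1 \<and> critical M f \<sigma>"
      hence "\<sigma> \<in> crit_cells M f 2" using s(2) A(3) unfolding crit_cells_def cells_def critical_def by auto
      hence "\<sigma> \<in> A2 - C" using ct by blast
      thus False using \<open>\<sigma> \<in> A1 \<and> critical M f \<sigma>\<close> A(4) by blast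
    qed
    ultimately show "\<sigma> \<in> {insert a1 e0}" by blast
  next
    fix \<sigma> assume "\<sigma> \<in> {insert a1 e0}"
    hence "\<sigma> = insert a1 e0" by simp
    moreover hence "critical K1 f1 \<sigma>" using cr1 ie0 unfolding K1_def by blast
    ultimately show "\<sigma> \<in> crit_cells K1 f1 2" using ie0 cie0 unfolding crit_cells_def cells_def by simp
  qed
  have c1: "card (crit_cells M f 0) = 1" "card (crit_cells M f 2) = 1"
    using perf unfolding perfect_surface_dmf_def by blast+
  have P1: "perfect_surface_dmf K1 f1"
    unfolding perfect_surface_dmf_def using dm1 cc0 cc1 cc2 c1 ce1 unfolding K1_def by simp
  have dd0: "crit_cells K2 f2 0 = {{a2}}"
  proof (intro equalityI subsetI)
    fix \<sigma> assume "\<sigma> \<in> crit_cells K2 f2 0"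
    hence s: "\<sigma> \<in> K2" "card \<sigma> = 1" "critical K2 f2 \<sigma>" unfolding crit_cells_def cells_def by auto
    hence "(\<sigma> \<in> A2 \<and> \<sigma> \<notin> C \<and> critical M f \<sigma>) \<or> \<sigma> = {a2}" using cr2 unfolding K2_def by blast
    moreover have "\<not> (\<sigma> \<in> A2 \<and> \<sigma> \<notin> C \<and> critical M f \<sigma>)"
    proof
      assume h: "\<sigma> \<in> A2 \<and> \<sigma> \<notin> C \<and> critical M f \<sigma>"
      hence "\<sigma> \<in> crit_cells M f 0" using s(2) A(3) unfolding crit_cells_def cells_def critical_def by auto
      hence "\<sigma> \<in> A1" using cv by blast
      thus False using h A(4) by blast
    qed
    ultimately show "\<sigma> \<in> {{a2}}" by blast
  next
    fix \<sigma> assume "\<sigma> \<in> {{a2}}"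
    hence "\<sigma> = {a2}" by simp
    moreover hence "critical K2 f2 \<sigma>" using cr2 a2K unfolding K2_def by blast
    ultimately show "\<sigma> \<in> crit_cells K2 f2 0" using a2K unfolding crit_cells_def cells_def by simp
  qed
  have dd1: "crit_cells K2 f2 1 = crit_cells M f 1 - A1"
  proof (intro equalityI subsetI)
    fix \<sigma> assume "\<sigma> \<in> crit_cells K2 f2 1"
    hence s: "\<sigma> \<in> K2" "card \<sigma> = 2" "critical K2 f2 \<sigma>" unfolding crit_cells_def cells_def by auto
    hence "(\<sigma> \<in> A2 \<and> \<sigma> \<notin> C \<and> critical M f \<sigma>) \<or> \<sigma> = {a2}" using cr2 unfolding K2_def by blast
    hence h: "\<sigma> \<in> A2 \<and> \<sigma> \<notin> C \<and> critical M f \<sigma>" using s(2) by auto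
    hence "\<sigma> \<notin> A1" using A(4) by blast
    thus "\<sigma> \<in> crit_cells M f 1 - A1" using h s(2) A(3) unfolding crit_cells_def cells_def by auto
  next
    fix \<sigma> assume h: "\<sigma> \<in> crit_cells M f 1 - A1"
    hence s: "\<sigma> \<in> A2" "\<sigma> \<notin> C" "card \<sigma> = 2" "critical M f \<sigma>"
      using ce2(1) unfolding crit_cells_def cells_def by auto
    hence "\<sigma> \<in> K2" unfolding K2_def by blast
    hence "critical K2 f2 \<sigma>" using cr2 s unfolding K2_def by blast
    thus "\<sigma> \<in> crit_cells K2 f2 1" using \<open>\<sigma> \<in> K2\<close> s(3) unfolding crit_cells_def cells_def by auto
  qed
  have dd2: "crit_cells K2 f2 2 = crit_cells M f 2"
  proof (intro equalityI subsetI)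
    fix \<sigma> assume "\<sigma> \<in> crit_cells K2 f2 2"
    hence s: "\<sigma> \<in> K2" "card \<sigma> = 3" "critical K2 f2 \<sigma>" unfolding crit_cells_def cells_def by auto
    hence "(\<sigma> \<in> A2 \<and> \<sigma> \<notin> C \<and> critical M f \<sigma>) \<or> \<sigma> = {a2}" using cr2 unfolding K2_def by blast
    hence h: "\<sigma> \<in> A2 \<and> \<sigma> \<notin> C \<and> critical M f \<sigma>" using s(2) by auto
    thus "\<sigma> \<in> crit_cells M f 2" using h s(2) A(3) unfolding crit_cells_def cells_def by auto
  next
    fix \<sigma> assume h: "\<sigma> \<in> crit_cells M f 2"
    hence s: "\<sigma> \<in> A2" "\<sigma> \<notin> C" "card \<sigma> = 3" "critical M f \<sigma>"
      using ct unfolding crit_cells_def cells_def by auto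
    hence "\<sigma> \<in> K2" unfolding K2_def by blast
    hence "critical K2 f2 \<sigma>" using cr2 s unfolding K2_def by blast
    thus "\<sigma> \<in> crit_cells K2 f2 2" using \<open>\<sigma> \<in> K2\<close> s(3) unfolding crit_cells_def cells_def by auto
  qed
  have P2: "perfect_surface_dmf K2 f2"
    unfolding perfect_surface_dmf_def using dm2 dd0 dd1 dd2 c1 ce2(2) unfolding K2_def by simp
  have G1: "{(\<sigma>, \<tau>) \<in> gradient M f. \<sigma> \<in> A1 \<and> \<tau> \<in> A1} \<subseteq> gradient K1 f1"
    unfolding gradient_def K1_def using f1A by auto
  have G2: "{(\<sigma>, \<tau>) \<in> gradient M f. \<sigma> \<in> A2 \<and> \<tau> \<in> A2} \<subseteq> gradient K2 f2"
    unfolding gradient_def K2_def using f2A by auto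
  show ?thesis using P1 P2 f1A f2A G1 G2 unfolding K1_def K2_def by blast
qed


end
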